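(* Let $k$ be a commutative ring, $H$ a cocommutative Hopf algebra over $k$ with antipode $S$, $A$ a cleft right $H$-comodule algebra with commutative $B=A^{\mathrm{co}H}$, regarded as a left $H$-module algebra via $h\cdot b=t(h_{(1)})bu(h_{(2)})$. Assume $\Omega_A\neq\emptyset$ and fix $t_0\in\Omega_A$; let $u_0=t_0\circ S$. Then $F:Z^1(H,B)\to\Omega_A$, $F(v)=v*t_0$, is a bijection with inverse $t\mapsto t*u_0$; $F$ maps cohomologous cocycles to equivalent elements of $\Omega_A$ and $F^{-1}$ maps equivalent elements to cohomologous cocycles. Hence $F$ induces a bijection $H^1(H,B)\to\overline{\Omega}_A$.
   Context: $\Delta(h)=h_{(1)}\otimes h_{(2)}$, $\rho(a)=a_{[0]}\otimes a_{[1]}$, $B=\{a:\rho(a)=a\otimes1\}$; convolution $(f*g)(h)=f(h_{(1)})g(h_{(2)})$. $A$ cleft: there is a convolution invertible $H$-colinear $t:H\to A$ ($\rho(t(h))=t(h_{(1)})\otimes h_{(2)}$) with inverse $u$; the module algebra structure on $B$ is independent of $t$. $\Omega_A$ is the set of $H$-colinear algebra maps $H\to A$; $t_1\sim t_2$ in $\Omega_A$ iff there is a unit $b\in U(B)$ with $bt_1(h)=t_2(h)b$ for all $h$; $\overline{\Omega}_A=\Omega_A/\sim$. $Z^1(H,B)$ is the group (under convolution) of convolution invertible $v:H\to B$ with $v(hk)=(h_{(1)}\cdot v(k))v(h_{(2)})$; $B^1(H,B)=\{f_b:b\in U(B)\}$ with $f_b(h)=(h\cdot b)b^{-1}$; $v\sim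 v_1$ (cohomologous) iff $v=f_b*v_1$ for some $b\in U(B)$; $H^1(H,B)=Z^1(H,B)/B^1(H,B)$. *)

theory Defs
  imports Main
begin

definition kmod :: "('k::comm_ring_1 \<Rightarrow> 'x::ab_group_add \<Rightarrow> 'x) \<Rightarrow> bool" where
  "kmod s \<longleftrightarrow> (\<forall>c x y. s c (x + y) = s c x + s c y) \<and> (\<forall>c d x. s (c + d) x = s c x + s d x)
     \<and> (\<forall>c d x. s c (s d x) = s (c * d) x) \<and> (\<forall>x. s 1 x = x)"

definition kalg :: "('k::comm_ring_1 \<Rightarrow> 'x::ring_1 \<Rightarrow> 'x) \<Rightarrow> bool" where
  "kalg s \<longleftrightarrow> kmod s \<and> (\<forall>c x y. s c (x * y) = s c x * y \<and> s c (x * y) = x * s c y)"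

definition klin :: "('k::comm_ring_1 \<Rightarrow> 'x::ab_group_add \<Rightarrow> 'x) \<Rightarrow> ('k \<Rightarrow> 'y::ab_group_add \<Rightarrow> 'y)
    \<Rightarrow> ('x \<Rightarrow> 'y) \<Rightarrow> bool" where
  "klin s1 s2 f \<longleftrightarrow> (\<forall>x y. f (x + y) = f x + f y) \<and> (\<forall>c x. f (s1 c x) = s2 c (f x))"

section \<open>Tensor products: elements represented by lists of simple tensors,
  equality = difference lies in the k-span of the (multi)linearity relations
  inside the free k-module on the product set\<close>

definition fdelta :: "'p \<Rightarrow> 'p \<Rightarrow> 'k::comm_ring_1" where
  "fdelta p = (\<lambda>q. if q = p then 1 else 0)"

definition formal :: "'p list \<Rightarrow> 'p \<Rightarrow> 'k::comm_ring_1" where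
  "formal xs = (\<lambda>q. sum_list (map (\<lambda>p. fdelta p q) xs))"

definition kspan :: "('p \<Rightarrow> 'k::comm_ring_1) set \<Rightarrow> ('p \<Rightarrow> 'k) set" where
  "kspan R = {f. \<exists>l. set (map snd l) \<subseteq> R \<and> f = (\<lambda>q. sum_list (map (\<lambda>(c, r). c * r q) l))}"

definition rel2 :: "('k::comm_ring_1 \<Rightarrow> 'x::ab_group_add \<Rightarrow> 'x) \<Rightarrow> ('k \<Rightarrow> 'y::ab_group_add \<Rightarrow> 'y)
    \<Rightarrow> ('x \<times> 'y \<Rightarrow> 'k) set" where
  "rel2 s1 s2 =
     {(\<lambda>q. fdelta (x + x', y) q - fdelta (x, y) q - fdelta (x', y) q) | x x' y. True}
   \<union> {(\<lambda>q. fdelta (x, y + y') q - fdelta (x, y) q - fdelta (x, y') q) | x y y'. True}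
   \<union> {(\<lambda>q. fdelta (s1 c x, y) q - c * fdelta (x, y) q) | c x y. True}
   \<union> {(\<lambda>q. fdelta (x, s2 c y) q - c * fdelta (x, y) q) | c x y. True}"

definition rel3 :: "('k::comm_ring_1 \<Rightarrow> 'x::ab_group_add \<Rightarrow> 'x) \<Rightarrow> ('k \<Rightarrow> 'y::ab_group_add \<Rightarrow> 'y)
    \<Rightarrow> ('k \<Rightarrow> 'z::ab_group_add \<Rightarrow> 'z) \<Rightarrow> ('x \<times> 'y \<times> 'z \<Rightarrow> 'k) set" where
  "rel3 s1 s2 s3 =
     {(\<lambda>q. fdelta (x + x', y, z) q - fdelta (x, y, z) q - fdelta (x', y, z) q) | x x' y z. True}
   \<union> {(\<lambda>q. fdelta (x, y + y', z) q - fdelta (x, y, z) q - fdelta (x, y', z) q) | x y y' z. True}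
   \<union> {(\<lambda>q. fdelta (x, y, z + z') q - fdelta (x, y, z) q - fdelta (x, y, z') q) | x y z z'. True}
   \<union> {(\<lambda>q. fdelta (s1 c x, y, z) q - c * fdelta (x, y, z) q) | c x y z. True}
   \<union> {(\<lambda>q. fdelta (x, s2 c y, z) q - c * fdelta (x, y, z) q) | c x y z. True}
   \<union> {(\<lambda>q. fdelta (x, y, s3 c z) q - c * fdelta (x, y, z) q) | c x y z. True}"

definition teq2 :: "('k::comm_ring_1 \<Rightarrow> 'x::ab_group_add \<Rightarrow> 'x) \<Rightarrow> ('k \<Rightarrow> 'y::ab_group_add \<Rightarrow> 'y)
    \<Rightarrow> ('x \<times> 'y) list \<Rightarrow> ('x \<times> 'y) list \<Rightarrow> bool" where
  "teq2 s1 s2 xs ys \<longleftrightarrow> (\<lambda>q. formal xs q - formal ys q) \<in> kspan (rel2 s1 s2)"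

definition teq3 :: "('k::comm_ring_1 \<Rightarrow> 'x::ab_group_add \<Rightarrow> 'x) \<Rightarrow> ('k \<Rightarrow> 'y::ab_group_add \<Rightarrow> 'y)
    \<Rightarrow> ('k \<Rightarrow> 'z::ab_group_add \<Rightarrow> 'z) \<Rightarrow> ('x \<times> 'y \<times> 'z) list \<Rightarrow> ('x \<times> 'y \<times> 'z) list \<Rightarrow> bool" where
  "teq3 s1 s2 s3 xs ys \<longleftrightarrow> (\<lambda>q. formal xs q - formal ys q) \<in> kspan (rel3 s1 s2 s3)"

definition tmul :: "('x::times \<times> 'y::times) list \<Rightarrow> ('x \<times> 'y) list \<Rightarrow> ('x \<times> 'y) list" where
  "tmul xs ys = [(a * c, b * d). (a, b) \<leftarrow> xs, (c, d) \<leftarrow> ys]"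

definition flip :: "('x \<times> 'y) list \<Rightarrow> ('y \<times> 'x) list" where
  "flip xs = map (\<lambda>(a, b). (b, a)) xs"

definition dl :: "('x \<Rightarrow> ('x1 \<times> 'x2) list) \<Rightarrow> ('x \<times> 'y) list \<Rightarrow> ('x1 \<times> 'x2 \<times> 'y) list" where
  "dl D xs = concat (map (\<lambda>(a, b). map (\<lambda>(a1, a2). (a1, a2, b)) (D a)) xs)"

definition dr :: "('y \<Rightarrow> ('y1 \<times> 'y2) list) \<Rightarrow> ('x \<times> 'y) list \<Rightarrow> ('x \<times> 'y1 \<times> 'y2) list" where
  "dr D xs = concat (map (\<lambda>(a, b). map (\<lambda>(b1, b2). (a, b1, b2)) (D b)) xs)"

text \<open>H (type 'h, scalar action sH) is a Hopf algebra over k with comultiplication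
  Delta (Delta h = sum of simple tensors, in Sweedler notation h_(1) (x) h_(2)),
  counit eps and antipode S.\<close>
definition hopf_alg :: "('k::comm_ring_1 \<Rightarrow> 'h::ring_1 \<Rightarrow> 'h) \<Rightarrow> ('h \<Rightarrow> ('h \<times> 'h) list)
    \<Rightarrow> ('h \<Rightarrow> 'k) \<Rightarrow> ('h \<Rightarrow> 'h) \<Rightarrow> bool" where
  "hopf_alg s Delta eps S \<longleftrightarrow> kalg s
   \<and> (\<forall>x y. teq2 s s (Delta (x + y)) (Delta x @ Delta y))
   \<and> (\<forall>c x. teq2 s s (Delta (s c x)) (map (\<lambda>(a, b). (s c a, b)) (Delta x)))
   \<and> (\<forall>h. teq3 s s s (dl Delta (Delta h)) (dr Delta (Delta h)))
   \<and> klin s (\<lambda>c d. c * d) eps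
   \<and> (\<forall>h. sum_list (map (\<lambda>(a, b). s (eps a) b) (Delta h)) = h)
   \<and> (\<forall>h. sum_list (map (\<lambda>(a, b). s (eps b) a) (Delta h)) = h)
   \<and> (\<forall>x y. teq2 s s (Delta (x * y)) (tmul (Delta x) (Delta y)))
   \<and> teq2 s s (Delta 1) [(1, 1)]
   \<and> (\<forall>x y. eps (x * y) = eps x * eps y) \<and> eps 1 = 1
   \<and> klin s s S
   \<and> (\<forall>h. sum_list (map (\<lambda>(a, b). S a * b) (Delta h)) = s (eps h) 1)
   \<and> (\<forall>h. sum_list (map (\<lambda>(a, b). a * S b) (Delta h)) = s (eps h) 1)"

definition cocommutative :: "('k::comm_ring_1 \<Rightarrow> 'h::ring_1 \<Rightarrow> 'h) \<Rightarrow> ('h \<Rightarrow> ('h \<times> 'h) list) \<Rightarrow> bool" where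
  "cocommutative s Delta \<longleftrightarrow> (\<forall>h. teq2 s s (Delta h) (flip (Delta h)))"

definition comod_alg :: "('k::comm_ring_1 \<Rightarrow> 'h::ring_1 \<Rightarrow> 'h) \<Rightarrow> ('h \<Rightarrow> ('h \<times> 'h) list)
    \<Rightarrow> ('h \<Rightarrow> 'k) \<Rightarrow> ('k \<Rightarrow> 'a::ring_1 \<Rightarrow> 'a) \<Rightarrow> ('a \<Rightarrow> ('a \<times> 'h) list) \<Rightarrow> bool" where
  "comod_alg sH Delta eps sA rho \<longleftrightarrow> kalg sA
   \<and> (\<forall>x y. teq2 sA sH (rho (x + y)) (rho x @ rho y))
   \<and> (\<forall>c x. teq2 sA sH (rho (sA c x)) (map (\<lambda>(a, b). (sA c a, b)) (rho x)))
   \<and> (\<forall>a. teq3 sA sH sH (dl rho (rho a)) (dr Delta (rho a)))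
   \<and> (\<forall>a. sum_list (map (\<lambda>(x, h). sA (eps h) x) (rho a)) = a)
   \<and> (\<forall>x y. teq2 sA sH (rho (x * y)) (tmul (rho x) (rho y)))
   \<and> teq2 sA sH (rho 1) [(1, 1)]"

definition coinv :: "('k::comm_ring_1 \<Rightarrow> 'h::ring_1 \<Rightarrow> 'h) \<Rightarrow> ('k \<Rightarrow> 'a::ring_1 \<Rightarrow> 'a)
    \<Rightarrow> ('a \<Rightarrow> ('a \<times> 'h) list) \<Rightarrow> 'a set" where
  "coinv sH sA rho = {a. teq2 sA sH (rho a) [(a, 1)]}"

definition conv :: "('h \<Rightarrow> ('h \<times> 'h) list) \<Rightarrow> ('h \<Rightarrow> 'a::ring_1) \<Rightarrow> ('h \<Rightarrow> 'a) \<Rightarrow> 'h \<Rightarrow> 'a" where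
  "conv Delta f g = (\<lambda>h. sum_list (map (\<lambda>(a, b). f a * g b) (Delta h)))"

definition cunit :: "('k::comm_ring_1 \<Rightarrow> 'a::ring_1 \<Rightarrow> 'a) \<Rightarrow> ('h \<Rightarrow> 'k) \<Rightarrow> 'h \<Rightarrow> 'a" where
  "cunit sA eps = (\<lambda>h. sA (eps h) 1)"

definition colinear :: "('k::comm_ring_1 \<Rightarrow> 'h::ring_1 \<Rightarrow> 'h) \<Rightarrow> ('k \<Rightarrow> 'a::ring_1 \<Rightarrow> 'a)
    \<Rightarrow> ('h \<Rightarrow> ('h \<times> 'h) list) \<Rightarrow> ('a \<Rightarrow> ('a \<times> 'h) list) \<Rightarrow> ('h \<Rightarrow> 'a) \<Rightarrow> bool" where
  "colinear sH sA Delta rho t \<longleftrightarrow> klin sH sA t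
     \<and> (\<forall>h. teq2 sA sH (rho (t h)) (map (\<lambda>(a, b). (t a, b)) (Delta h)))"

definition conv_inverse :: "('k::comm_ring_1 \<Rightarrow> 'h::ring_1 \<Rightarrow> 'h) \<Rightarrow> ('k \<Rightarrow> 'a::ring_1 \<Rightarrow> 'a)
    \<Rightarrow> ('h \<Rightarrow> ('h \<times> 'h) list) \<Rightarrow> ('h \<Rightarrow> 'k) \<Rightarrow> ('h \<Rightarrow> 'a) \<Rightarrow> ('h \<Rightarrow> 'a) \<Rightarrow> bool" where
  "conv_inverse sH sA Delta eps t u \<longleftrightarrow> klin sH sA u
     \<and> conv Delta t u = cunit sA eps \<and> conv Delta u t = cunit sA eps"

definition OmegaA :: "('k::comm_ring_1 \<Rightarrow> 'h::ring_1 \<Rightarrow> 'h) \<Rightarrow> ('k \<Rightarrow> 'a::ring_1 \<Rightarrow> 'a)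
    \<Rightarrow> ('h \<Rightarrow> ('h \<times> 'h) list) \<Rightarrow> ('a \<Rightarrow> ('a \<times> 'h) list) \<Rightarrow> ('h \<Rightarrow> 'a) set" where
  "OmegaA sH sA Delta rho = {t. colinear sH sA Delta rho t
     \<and> (\<forall>x y. t (x * y) = t x * t y) \<and> t 1 = 1}"

definition unitsB :: "'a::ring_1 set \<Rightarrow> 'a set" where
  "unitsB B = {b \<in> B. \<exists>b' \<in> B. b * b' = 1 \<and> b' * b = 1}"

definition omega_equiv :: "'a::ring_1 set \<Rightarrow> ('h \<Rightarrow> 'a) \<Rightarrow> ('h \<Rightarrow> 'a) \<Rightarrow> bool" where
  "omega_equiv B t1 t2 \<longleftrightarrow> (\<exists>b \<in> unitsB B. \<forall>h. b * t1 h = t2 h * b)"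

definition act :: "('h \<Rightarrow> ('h \<times> 'h) list) \<Rightarrow> ('h \<Rightarrow> 'a::ring_1) \<Rightarrow> ('h \<Rightarrow> 'a) \<Rightarrow> 'h \<Rightarrow> 'a \<Rightarrow> 'a" where
  "act Delta t u h b = sum_list (map (\<lambda>(x, y). t x * b * u y) (Delta h))"

definition Z1 :: "('k::comm_ring_1 \<Rightarrow> 'h::ring_1 \<Rightarrow> 'h) \<Rightarrow> ('k \<Rightarrow> 'a::ring_1 \<Rightarrow> 'a)
    \<Rightarrow> ('h \<Rightarrow> ('h \<times> 'h) list) \<Rightarrow> ('h \<Rightarrow> 'k) \<Rightarrow> ('a \<Rightarrow> ('a \<times> 'h) list)
    \<Rightarrow> ('h \<Rightarrow> 'a) \<Rightarrow> ('h \<Rightarrow> 'a) \<Rightarrow> ('h \<Rightarrow> 'a) set" where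
  "Z1 sH sA Delta eps rho t u = {v. klin sH sA v \<and> (\<forall>h. v h \<in> coinv sH sA rho)
     \<and> (\<exists>w. klin sH sA w \<and> (\<forall>h. w h \<in> coinv sH sA rho)
            \<and> conv Delta v w = cunit sA eps \<and> conv Delta w v = cunit sA eps)
     \<and> (\<forall>h k. v (h * k) = sum_list (map (\<lambda>(x, y). act Delta t u x (v k) * v y) (Delta h)))}"

definition cohomologous :: "('k::comm_ring_1 \<Rightarrow> 'h::ring_1 \<Rightarrow> 'h) \<Rightarrow> ('k \<Rightarrow> 'a::ring_1 \<Rightarrow> 'a)
    \<Rightarrow> ('h \<Rightarrow> ('h \<times> 'h) list) \<Rightarrow> ('a \<Rightarrow> ('a \<times> 'h) list)
    \<Rightarrow> ('h \<Rightarrow> 'a) \<Rightarrow> ('h \<Rightarrow> 'a) \<Rightarrow> ('h \<Rightarrow> 'a) \<Rightarrow> ('h \<Rightarrow> 'a) \<Rightarrow> bool" where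
  "cohomologous sH sA Delta rho t u v v1 \<longleftrightarrow>
     (\<exists>b b'. b \<in> coinv sH sA rho \<and> b' \<in> coinv sH sA rho \<and> b * b' = 1 \<and> b' * b = 1
        \<and> v = conv Delta (\<lambda>h. act Delta t u h b * b') v1)"

end

theory Submission
  imports Defs "HOL-Library.Multiset" "HOL-Library.Function_Algebras"
begin


lemma kmod_add: "kmod s \<Longrightarrow> s c (x+y) = s c x + s c y" by (simp add: kmod_def)
lemma kmod_addc: "kmod s \<Longrightarrow> s (c+d) x = s c x + s d x" by (simp add: kmod_def)
lemma kmod_comp: "kmod s \<Longrightarrow> s c (s d x) = s (c*d) x" by (simp add: kmod_def)
lemma kmod_one: "kmod s \<Longrightarrow> s 1 x = x" by (simp add: kmod_def)
lemma kmod_zero: "kmod s \<Longrightarrow> s c 0 = 0"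
proof -
  assume k: "kmod s"
  have "s c (0+0) = s c 0 + s c 0" by (rule kmod_add[OF k])
  then show ?thesis by simp
qed
lemma kmod_zeroc: "kmod s \<Longrightarrow> s 0 x = 0"
proof -
  assume k: "kmod s"
  have "s (0+0) x = s 0 x + s 0 x" by (rule kmod_addc[OF k])
  then show ?thesis by simp
qed
lemma kmod_neg: "kmod s \<Longrightarrow> s c (-x) = - s c x"
proof -
  assume k: "kmod s"
  have "s c (x + -x) = s c x + s c (-x)" by (rule kmod_add[OF k])
  then show ?thesis using kmod_zero[OF k] by (simp add: eq_neg_iff_add_eq_0 add.commute)
qed
lemma kmod_negc: "kmod s \<Longrightarrow> s (-c) x = - s c x"
proof -
  assume k: "kmod s"
  have "s (c + -c) x = s c x + s (-c) x" by (rule kmod_addc[OF k])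
  then show ?thesis using kmod_zeroc[OF k] by (simp add: eq_neg_iff_add_eq_0 add.commute)
qed
lemma kmod_diff: "kmod s \<Longrightarrow> s c (x - y) = s c x - s c y"
  using kmod_add[of s c x "-y"] kmod_neg[of s c y] by simp
lemma kmod_diffc: "kmod s \<Longrightarrow> s (c - d) x = s c x - s d x"
  using kmod_addc[of s c "-d" x] kmod_negc[of s d x] by simp
lemma kmod_sum: "kmod s \<Longrightarrow> s c (sum f F) = (\<Sum>p\<in>F. s c (f p))"
  by (induction F rule: infinite_finite_induct) (auto simp: kmod_zero kmod_add)
lemma kmod_sum_list: "kmod s \<Longrightarrow> s c (sum_list (map f xs)) = sum_list (map (\<lambda>x. s c (f x)) xs)"
  by (induction xs) (auto simp: kmod_zero kmod_add)

lemma klin_add: "klin s1 s2 f \<Longrightarrow> f (x + y) = f x + f y" by (simp add: klin_def)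
lemma klin_scal: "klin s1 s2 f \<Longrightarrow> f (s1 c x) = s2 c (f x)" by (simp add: klin_def)
lemma klin_zero: "klin s1 s2 f \<Longrightarrow> f 0 = 0"
proof -
  assume k: "klin s1 s2 f"
  have "f (0+0) = f 0 + f 0" by (rule klin_add[OF k])
  then show ?thesis by simp
qed
lemma klin_neg: "klin s1 s2 f \<Longrightarrow> f (-x) = - f x"
proof -
  assume k: "klin s1 s2 f"
  have "f (x + -x) = f x + f (-x)" by (rule klin_add[OF k])
  then show ?thesis using klin_zero[OF k] by (simp add: eq_neg_iff_add_eq_0 add.commute)
qed
lemma klin_diff: "klin s1 s2 f \<Longrightarrow> f (x - y) = f x - f y"
  using klin_add[of s1 s2 f x "-y"] klin_neg[of s1 s2 f y] by simp
lemma klin_sum_list: "klin s1 s2 f \<Longrightarrow> f (sum_list (map g xs)) = sum_list (map (\<lambda>x. f (g x)) xs)"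
  by (induction xs) (auto simp: klin_zero klin_add)

section \<open>Linear functionals on formal combinations\<close>

definition LinF :: "('k::comm_ring_1 \<Rightarrow> 'z::ab_group_add \<Rightarrow> 'z) \<Rightarrow> ('p \<Rightarrow> 'z) \<Rightarrow> 'p set \<Rightarrow> ('p \<Rightarrow> 'k) \<Rightarrow> 'z"
  where "LinF s e F g = (\<Sum>p\<in>F. s (g p) (e p))"

lemma LinF_add: "kmod s \<Longrightarrow> LinF s e F (\<lambda>q. g1 q + g2 q) = LinF s e F g1 + LinF s e F g2"
  by (simp add: LinF_def kmod_addc sum.distrib)
lemma LinF_diff: "kmod s \<Longrightarrow> LinF s e F (\<lambda>q. g1 q - g2 q) = LinF s e F g1 - LinF s e F g2"
  by (simp add: LinF_def kmod_diffc sum_subtractf)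
lemma LinF_scal: "kmod s \<Longrightarrow> LinF s e F (\<lambda>q. c * g q) = s c (LinF s e F g)"
  by (simp add: LinF_def kmod_sum kmod_comp)
lemma LinF_fdelta: "kmod s \<Longrightarrow> finite F \<Longrightarrow> a \<in> F \<Longrightarrow> LinF s e F (fdelta a) = e a"
proof -
  assume k: "kmod s" and f: "finite F" and a: "a \<in> F"
  have "LinF s e F (fdelta a) = (\<Sum>p\<in>F. if a = p then e p else 0)"
    unfolding LinF_def fdelta_def by (rule sum.cong) (auto simp: kmod_one[OF k] kmod_zeroc[OF k])
  also have "\<dots> = e a" using f a by simp
  finally show ?thesis .
qed
lemma LinF_zero: "kmod s \<Longrightarrow> LinF s e F (\<lambda>q. 0) = 0"
  by (simp add: LinF_def kmod_zeroc)

lemma formal_Nil: "formal [] = (\<lambda>q. 0)" by (simp add: formal_def)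
lemma formal_Cons: "formal (x # xs) = (\<lambda>q. fdelta x q + formal xs q)" by (simp add: formal_def)
lemma formal_append: "formal (xs @ ys) = (\<lambda>q. formal xs q + formal ys q)" by (simp add: formal_def)

lemma LinF_formal: "kmod s \<Longrightarrow> finite F \<Longrightarrow> set xs \<subseteq> F \<Longrightarrow> LinF s e F (formal xs) = sum_list (map e xs)"
  by (induction xs) (simp_all add: formal_Nil formal_Cons LinF_zero LinF_add LinF_fdelta)

lemma LinF_comb: "kmod s \<Longrightarrow> LinF s e F (\<lambda>q. sum_list (map (\<lambda>(c, r). c * r q) l))
     = sum_list (map (\<lambda>(c, r). s c (LinF s e F r)) l)"
proof (induction l)
  case Nil then show ?case by (simp add: LinF_zero)
next
  case (Cons a l)
  obtain c r where a: "a = (c, r)" by force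
  have "LinF s e F (\<lambda>q. sum_list (map (\<lambda>(c, r). c * r q) (a # l)))
      = LinF s e F (\<lambda>q. c * r q) + LinF s e F (\<lambda>q. sum_list (map (\<lambda>(c, r). c * r q) l))"
    using LinF_add[OF Cons.prems, of e F "\<lambda>q. c * r q"] a by simp
  then show ?case using Cons LinF_scal[OF Cons.prems] a by simp
qed

definition submod :: "('k::comm_ring_1 \<Rightarrow> 'z::ab_group_add \<Rightarrow> 'z) \<Rightarrow> 'z set \<Rightarrow> bool" where
  "submod s M \<longleftrightarrow> 0 \<in> M \<and> (\<forall>x\<in>M. \<forall>y\<in>M. x + y \<in> M) \<and> (\<forall>c. \<forall>x\<in>M. s c x \<in> M)"

lemma submod_sum_list: "submod s M \<Longrightarrow> (\<forall>x\<in>set xs. f x \<in> M) \<Longrightarrow> sum_list (map f xs) \<in> M"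
  by (induction xs) (auto simp: submod_def)

lemma GL:
  assumes km: "kmod s" and sm: "submod s M"
    and R: "\<And>r. r \<in> R \<Longrightarrow> \<exists>P. finite P \<and> (\<forall>F. finite F \<longrightarrow> P \<subseteq> F \<longrightarrow> LinF s e F r \<in> M)"
    and sp: "(\<lambda>q. formal xs q - formal ys q) \<in> kspan R"
  shows "sum_list (map e xs) - sum_list (map e ys) \<in> M"
proof -
  obtain l where l: "set (map snd l) \<subseteq> R"
    and eq: "(\<lambda>q. formal xs q - formal ys q) = (\<lambda>q. sum_list (map (\<lambda>(c, r). c * r q) l))"
    using sp unfolding kspan_def by blast
  have ch: "\<forall>r \<in> set (map snd l). \<exists>P. finite P \<and> (\<forall>F. finite F \<longrightarrow> P \<subseteq> F \<longrightarrow> LinF s e F r \<in> M)"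
  proof
    fix r assume "r \<in> set (map snd l)"
    then have "r \<in> R" using l by blast
    then show "\<exists>P. finite P \<and> (\<forall>F. finite F \<longrightarrow> P \<subseteq> F \<longrightarrow> LinF s e F r \<in> M)" by (rule R)
  qed
  obtain Pf where Pf: "\<And>r. r \<in> set (map snd l) \<Longrightarrow> finite (Pf r) \<and> (\<forall>F. finite F \<longrightarrow> Pf r \<subseteq> F \<longrightarrow> LinF s e F r \<in> M)"
    using bchoice[OF ch] by blast
  define F where "F = set xs \<union> set ys \<union> \<Union>(Pf ` set (map snd l))"
  have fin: "finite F" unfolding F_def
  proof (intro finite_UnI finite_Union)
    show "finite (Pf ` set (map snd l))" by simp
    fix P assume "P \<in> Pf ` set (map snd l)"
    then obtain r where "r \<in> set (map snd l)" "P = Pf r" by blast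
    then show "finite P" using Pf by blast
  qed simp_all
  have "sum_list (map e xs) - sum_list (map e ys) = LinF s e F (\<lambda>q. formal xs q - formal ys q)"
  proof -
    have "set xs \<subseteq> F" "set ys \<subseteq> F" unfolding F_def by auto
    then show ?thesis using LinF_diff[OF km, of e F "formal xs" "formal ys"] LinF_formal[OF km fin] by simp
  qed
  also have "\<dots> = sum_list (map (\<lambda>(c, r). s c (LinF s e F r)) l)"
    unfolding eq by (rule LinF_comb[OF km])
  also have "\<dots> \<in> M"
  proof (rule submod_sum_list[OF sm], rule ballI)
    fix x assume x: "x \<in> set l"
    obtain c r where xc: "x = (c, r)" by force
    have rin: "r \<in> set (map snd l)" using x xc by force
    have "Pf r \<subseteq> F" unfolding F_def using rin by blast
    then have "LinF s e F r \<in> M" using Pf[OF rin] fin by blast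
    then show "(case x of (c, r) \<Rightarrow> s c (LinF s e F r)) \<in> M" using sm xc by (simp add: submod_def)
  qed
  finally show ?thesis .
qed

lemma LinF_3: "kmod s \<Longrightarrow> finite F \<Longrightarrow> a \<in> F \<Longrightarrow> b \<in> F \<Longrightarrow> c \<in> F \<Longrightarrow>
  LinF s e F (\<lambda>q. fdelta a q - fdelta b q - fdelta c q) = e a - (e b + e c)"
proof -
  assume k: "kmod s" and f: "finite F" and abc: "a \<in> F" "b \<in> F" "c \<in> F"
  have "LinF s e F (\<lambda>q. fdelta a q - fdelta b q - fdelta c q)
     = LinF s e F (\<lambda>q. fdelta a q - fdelta b q) - LinF s e F (fdelta c)"
    by (rule LinF_diff[OF k])
  also have "LinF s e F (\<lambda>q. fdelta a q - fdelta b q) = LinF s e F (fdelta a) - LinF s e F (fdelta b)"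
    by (rule LinF_diff[OF k])
  finally show ?thesis using LinF_fdelta[OF k f] abc by simp
qed

lemma LinF_2: "kmod s \<Longrightarrow> finite F \<Longrightarrow> a \<in> F \<Longrightarrow> b \<in> F \<Longrightarrow>
  LinF s e F (\<lambda>q. fdelta a q - c * fdelta b q) = e a - s c (e b)"
proof -
  assume k: "kmod s" and f: "finite F" and ab: "a \<in> F" "b \<in> F"
  have "LinF s e F (\<lambda>q. fdelta a q - c * fdelta b q)
     = LinF s e F (fdelta a) - LinF s e F (\<lambda>q. c * fdelta b q)"
    by (rule LinF_diff[OF k])
  also have "LinF s e F (\<lambda>q. c * fdelta b q) = s c (LinF s e F (fdelta b))"
    by (rule LinF_scal[OF k])
  finally show ?thesis using LinF_fdelta[OF k f] ab by simp
qed

lemma rel2_LinF: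
  assumes km: "kmod sZ" and sm: "submod sZ M"
    and a1: "\<And>x x' y. e (x + x', y) - (e (x, y) + e (x', y)) \<in> M"
    and a2: "\<And>x y y'. e (x, y + y') - (e (x, y) + e (x, y')) \<in> M"
    and a3: "\<And>c x y. e (s1 c x, y) - sZ c (e (x, y)) \<in> M"
    and a4: "\<And>c x y. e (x, s2 c y) - sZ c (e (x, y)) \<in> M"
    and r: "r \<in> rel2 s1 s2"
  shows "\<exists>P. finite P \<and> (\<forall>F. finite F \<longrightarrow> P \<subseteq> F \<longrightarrow> LinF sZ e F r \<in> M)"
  using r unfolding rel2_def
proof (elim UnE CollectE exE conjE)
  fix x x' y assume r: "r = (\<lambda>q. fdelta (x + x', y) q - fdelta (x, y) q - fdelta (x', y) q)"
  show ?thesis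
    apply (rule exI[of _ "{(x + x', y), (x, y), (x', y)}"])
    using a1[where x=x and x'=x' and y=y] by (simp add: r LinF_3[OF km])
next
  fix x y y' assume r: "r = (\<lambda>q. fdelta (x, y + y') q - fdelta (x, y) q - fdelta (x, y') q)"
  show ?thesis
    apply (rule exI[of _ "{(x, y + y'), (x, y), (x, y')}"])
    using a2[where x=x and y=y and y'=y'] by (simp add: r LinF_3[OF km])
next
  fix c x y assume r: "r = (\<lambda>q. fdelta (s1 c x, y) q - c * fdelta (x, y) q)"
  show ?thesis
    apply (rule exI[of _ "{(s1 c x, y), (x, y)}"])
    using a3[where c=c and x=x and y=y] by (simp add: r LinF_2[OF km])
next
  fix c x y assume r: "r = (\<lambda>q. fdelta (x, s2 c y) q - c * fdelta (x, y) q)"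
  show ?thesis
    apply (rule exI[of _ "{(x, s2 c y), (x, y)}"])
    using a4[where c=c and x=x and y=y] by (simp add: r LinF_2[OF km])
qed

lemma rel3_LinF:
  assumes km: "kmod sZ" and sm: "submod sZ M"
    and a1: "\<And>x x' y z. e (x + x', y, z) - (e (x, y, z) + e (x', y, z)) \<in> M"
    and a2: "\<And>x y y' z. e (x, y + y', z) - (e (x, y, z) + e (x, y', z)) \<in> M"
    and a3: "\<And>x y z z'. e (x, y, z + z') - (e (x, y, z) + e (x, y, z')) \<in> M"
    and a4: "\<And>c x y z. e (s1 c x, y, z) - sZ c (e (x, y, z)) \<in> M"
    and a5: "\<And>c x y z. e (x, s2 c y, z) - sZ c (e (x, y, z)) \<in> M"
    and a6: "\<And>c x y z. e (x, y, s3 c z) - sZ c (e (x, y, z)) \<in> M"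
    and r: "r \<in> rel3 s1 s2 s3"
  shows "\<exists>P. finite P \<and> (\<forall>F. finite F \<longrightarrow> P \<subseteq> F \<longrightarrow> LinF sZ e F r \<in> M)"
  using r unfolding rel3_def
proof (elim UnE CollectE exE conjE)
  fix x x' y z assume r: "r = (\<lambda>q. fdelta (x + x', y, z) q - fdelta (x, y, z) q - fdelta (x', y, z) q)"
  show ?thesis
    apply (rule exI[of _ "{(x + x', y, z), (x, y, z), (x', y, z)}"])
    using a1[where x=x and x'=x' and y=y and z=z] by (simp add: r LinF_3[OF km])
next
  fix x y y' z assume r: "r = (\<lambda>q. fdelta (x, y + y', z) q - fdelta (x, y, z) q - fdelta (x, y', z) q)"
  show ?thesis
    apply (rule exI[of _ "{(x, y + y', z), (x, y, z), (x, y', z)}"])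
    using a2[where x=x and y=y and y'=y' and z=z] by (simp add: r LinF_3[OF km])
next
  fix x y z z' assume r: "r = (\<lambda>q. fdelta (x, y, z + z') q - fdelta (x, y, z) q - fdelta (x, y, z') q)"
  show ?thesis
    apply (rule exI[of _ "{(x, y, z + z'), (x, y, z), (x, y, z')}"])
    using a3[where x=x and y=y and z=z and z'=z'] by (simp add: r LinF_3[OF km])
next
  fix c x y z assume r: "r = (\<lambda>q. fdelta (s1 c x, y, z) q - c * fdelta (x, y, z) q)"
  show ?thesis
    apply (rule exI[of _ "{(s1 c x, y, z), (x, y, z)}"])
    using a4[where c=c and x=x and y=y and z=z] by (simp add: r LinF_2[OF km])
next
  fix c x y z assume r: "r = (\<lambda>q. fdelta (x, s2 c y, z) q - c * fdelta (x, y, z) q)"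
  show ?thesis
    apply (rule exI[of _ "{(x, s2 c y, z), (x, y, z)}"])
    using a5[where c=c and x=x and y=y and z=z] by (simp add: r LinF_2[OF km])
next
  fix c x y z assume r: "r = (\<lambda>q. fdelta (x, y, s3 c z) q - c * fdelta (x, y, z) q)"
  show ?thesis
    apply (rule exI[of _ "{(x, y, s3 c z), (x, y, z)}"])
    using a6[where c=c and x=x and y=y and z=z] by (simp add: r LinF_2[OF km])
qed


lemma kspan_zero: "(\<lambda>q. 0) \<in> kspan R"
  unfolding kspan_def by (rule CollectI, rule exI[of _ "[]"]) simp

lemma kspan_base: "r \<in> R \<Longrightarrow> r \<in> kspan R"
  unfolding kspan_def by (rule CollectI, rule exI[of _ "[(1, r)]"]) simp

lemma kspan_add: "f \<in> kspan R \<Longrightarrow> g \<in> kspan R \<Longrightarrow> (\<lambda>q. f q + g q) \<in> kspan R"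
proof -
  assume "f \<in> kspan R" "g \<in> kspan R"
  then obtain l1 l2 where "set (map snd l1) \<subseteq> R" "f = (\<lambda>q. sum_list (map (\<lambda>(c, r). c * r q) l1))"
    "set (map snd l2) \<subseteq> R" "g = (\<lambda>q. sum_list (map (\<lambda>(c, r). c * r q) l2))"
    unfolding kspan_def by blast
  then show ?thesis unfolding kspan_def by (intro CollectI exI[of _ "l1 @ l2"]) auto
qed

lemma kspan_scal: "f \<in> kspan R \<Longrightarrow> (\<lambda>q. c * f q) \<in> kspan R"
proof -
  assume "f \<in> kspan R"
  then obtain l1 where l1: "set (map snd l1) \<subseteq> R" "f = (\<lambda>q. sum_list (map (\<lambda>(c, r). c * r q) l1))"
    unfolding kspan_def by blast
  have "(\<lambda>q. c * f q) = (\<lambda>q. sum_list (map (\<lambda>(d, r). d * r q) (map (\<lambda>(d, r). (c * d, r)) l1)))"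
    unfolding l1(2) by (rule ext, induction l1) (auto simp: algebra_simps)
  moreover have "set (map snd (map (\<lambda>(d, r). (c * d, r)) l1)) \<subseteq> R" using l1(1) by auto
  ultimately show ?thesis unfolding kspan_def by blast
qed

lemma kspan_ext: "f \<in> kspan R \<Longrightarrow> (\<And>q. f q = g q) \<Longrightarrow> g \<in> kspan R"
proof -
  assume a: "f \<in> kspan R" and b: "\<And>q. f q = g q"
  have "f = g" using b by (simp add: fun_eq_iff)
  then show ?thesis using a by simp
qed

lemma kspan_neg: "f \<in> kspan R \<Longrightarrow> (\<lambda>q. - f q) \<in> kspan R"
  using kspan_scal[of f R "-1"] by simp

lemma kspan_diff: "f \<in> kspan R \<Longrightarrow> g \<in> kspan R \<Longrightarrow> (\<lambda>q. f q - g q) \<in> kspan R"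
  using kspan_add[of f R "\<lambda>q. - g q"] kspan_neg[of g R] by simp

lemma teq2_refl: "teq2 s1 s2 xs xs"
  unfolding teq2_def by (rule kspan_ext[OF kspan_zero]) simp

lemma teq2_sym: "teq2 s1 s2 xs ys \<Longrightarrow> teq2 s1 s2 ys xs"
  unfolding teq2_def by (erule kspan_ext[OF kspan_neg]) simp

lemma teq2_trans: "teq2 s1 s2 xs ys \<Longrightarrow> teq2 s1 s2 ys zs \<Longrightarrow> teq2 s1 s2 xs zs"
  unfolding teq2_def
proof -
  assume a: "(\<lambda>q. formal xs q - formal ys q) \<in> kspan (rel2 s1 s2)"
    and b: "(\<lambda>q. formal ys q - formal zs q) \<in> kspan (rel2 s1 s2)"
  show "(\<lambda>q. formal xs q - formal zs q) \<in> kspan (rel2 s1 s2)"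
    by (rule kspan_ext[OF kspan_add[OF a b]]) simp
qed

lemma teq2_append: "teq2 s1 s2 xs ys \<Longrightarrow> teq2 s1 s2 xs' ys' \<Longrightarrow> teq2 s1 s2 (xs @ xs') (ys @ ys')"
  unfolding teq2_def
proof -
  assume a: "(\<lambda>q. formal xs q - formal ys q) \<in> kspan (rel2 s1 s2)"
    and b: "(\<lambda>q. formal xs' q - formal ys' q) \<in> kspan (rel2 s1 s2)"
  show "(\<lambda>q. formal (xs @ xs') q - formal (ys @ ys') q) \<in> kspan (rel2 s1 s2)"
    by (rule kspan_ext[OF kspan_add[OF a b]]) (simp add: formal_append)
qed

lemma teq2_concat: "(\<And>x. x \<in> set L \<Longrightarrow> teq2 s1 s2 (f x) (g x)) \<Longrightarrow>
    teq2 s1 s2 (concat (map f L)) (concat (map g L))"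
proof (induction L)
  case Nil then show ?case by (simp add: teq2_refl)
next
  case (Cons a L)
  have 1: "teq2 s1 s2 (f a) (g a)" using Cons.prems by simp
  have 2: "teq2 s1 s2 (concat (map f L)) (concat (map g L))" using Cons.prems by (intro Cons.IH) simp
  show ?case using teq2_append[OF 1 2] by simp
qed

lemma teq2_cancel: "teq2 s1 s2 (xs @ ys) (xs @ zs) \<Longrightarrow> teq2 s1 s2 ys zs"
  unfolding teq2_def by (erule kspan_ext) (simp add: formal_append)

lemma formal_count: "formal xs q = of_nat (count (mset xs) q)"
  by (induction xs) (simp_all add: formal_Nil formal_Cons fdelta_def)

lemma formal_mset: "mset xs = mset ys \<Longrightarrow> formal xs = formal ys"
  by (rule ext) (simp add: formal_count)

lemma teq2_mset: "mset xs = mset ys \<Longrightarrow> teq2 s1 s2 xs ys"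
proof -
  assume m: "mset xs = mset ys"
  show ?thesis unfolding teq2_def by (intro kspan_ext[OF kspan_zero]) (simp add: formal_count m)
qed

lemma teq3_refl: "teq3 s1 s2 s3 xs xs"
  unfolding teq3_def by (rule kspan_ext[OF kspan_zero]) simp

lemma teq3_sym: "teq3 s1 s2 s3 xs ys \<Longrightarrow> teq3 s1 s2 s3 ys xs"
  unfolding teq3_def by (erule kspan_ext[OF kspan_neg]) simp

lemma rel2_1: "(\<lambda>q. fdelta (x + x', y) q - fdelta (x, y) q - fdelta (x', y) q) \<in> rel2 s1 s2"
  unfolding rel2_def by blast
lemma rel2_2: "(\<lambda>q. fdelta (x, y + y') q - fdelta (x, y) q - fdelta (x, y') q) \<in> rel2 s1 s2"
  unfolding rel2_def by blast
lemma rel2_3: "(\<lambda>q. fdelta (s1 c x, y) q - c * fdelta (x, y) q) \<in> rel2 s1 s2"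
  unfolding rel2_def by blast
lemma rel2_4: "(\<lambda>q. fdelta (x, s2 c y) q - c * fdelta (x, y) q) \<in> rel2 s1 s2"
  unfolding rel2_def by blast

lemma teq2_addL: "teq2 s1 s2 [(x + x', y)] [(x, y), (x', y)]"
  unfolding teq2_def
  by (rule kspan_ext[OF kspan_base[OF rel2_1[where x=x and x'=x' and y=y]]]) (simp add: formal_def algebra_simps)

lemma teq2_addR: "teq2 s1 s2 [(x, y + y')] [(x, y), (x, y')]"
  unfolding teq2_def
  by (rule kspan_ext[OF kspan_base[OF rel2_2[where x=x and y=y and y'=y']]]) (simp add: formal_def algebra_simps)

lemma kspan_scL: "(\<lambda>q. fdelta (s1 c x, y) q - c * fdelta (x, y) q) \<in> kspan (rel2 s1 s2)"
  by (rule kspan_base[OF rel2_3])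

lemma kspan_scR: "(\<lambda>q. fdelta (x, s2 c y) q - c * fdelta (x, y) q) \<in> kspan (rel2 s1 s2)"
  by (rule kspan_base[OF rel2_4])

lemma teq2_scLR: "teq2 s1 s2 [(s1 c x, y)] [(x, s2 c y)]"
  unfolding teq2_def
  by (rule kspan_ext[OF kspan_diff[OF kspan_scL[where c=c and x=x and y=y] kspan_scR[where c=c and x=x and y=y]]]) (simp add: formal_def)

lemma formal_sc: "(\<lambda>q. formal (map (\<lambda>(a, b). (s1 c a, b)) L) q - c * formal L q) \<in> kspan (rel2 s1 s2)"
proof (induction L)
  case Nil then show ?case by (simp add: formal_Nil kspan_zero)
next
  case (Cons p L)
  obtain a b where p: "p = (a, b)" by force
  show ?case
    by (rule kspan_ext[OF kspan_add[OF kspan_scL[of s1 c a b s2] Cons.IH]])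
       (simp add: p formal_Cons algebra_simps)
qed

lemma teq2_zeroL: "teq2 s1 s2 [(0, y)] []"
proof -
  have "teq2 s1 s2 [(0 + 0, y)] [(0, y), (0, y)]" by (rule teq2_addL)
  then show ?thesis unfolding teq2_def
    by (elim kspan_ext[OF kspan_neg]) (simp add: formal_def)
qed

lemma teq2_zeroR: "teq2 s1 s2 [(x, 0)] []"
proof -
  have "teq2 s1 s2 [(x, 0 + 0)] [(x, 0), (x, 0)]" by (rule teq2_addR)
  then show ?thesis unfolding teq2_def
    by (elim kspan_ext[OF kspan_neg]) (simp add: formal_def)
qed

lemma teq2_sumL: "teq2 s1 s2 [(sum_list (map f L), y)] (map (\<lambda>l. (f l, y)) L)"
proof (induction L)
  case Nil then show ?case by (simp add: teq2_zeroL)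
next
  case (Cons a L)
  have h1: "teq2 s1 s2 [(f a + sum_list (map f L), y)] ([(f a, y)] @ [(sum_list (map f L), y)])"
    using teq2_addL[of s1 s2 "f a" "sum_list (map f L)" y] by simp
  have h2: "teq2 s1 s2 ([(f a, y)] @ [(sum_list (map f L), y)]) ([(f a, y)] @ map (\<lambda>l. (f l, y)) L)"
    by (rule teq2_append[OF teq2_refl Cons.IH])
  show ?case using teq2_trans[OF h1 h2] by simp
qed

lemma teq2_sumR: "teq2 s1 s2 [(x, sum_list (map f L))] (map (\<lambda>l. (x, f l)) L)"
proof (induction L)
  case Nil then show ?case by (simp add: teq2_zeroR)
next
  case (Cons a L)
  have h1: "teq2 s1 s2 [(x, f a + sum_list (map f L))] ([(x, f a)] @ [(x, sum_list (map f L))])"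
    using teq2_addR[of s1 s2 x "f a" "sum_list (map f L)"] by simp
  have h2: "teq2 s1 s2 ([(x, f a)] @ [(x, sum_list (map f L))]) ([(x, f a)] @ map (\<lambda>l. (x, f l)) L)"
    by (rule teq2_append[OF teq2_refl Cons.IH])
  show ?case using teq2_trans[OF h1 h2] by simp
qed

definition sF :: "'k::comm_ring_1 \<Rightarrow> ('q \<Rightarrow> 'k) \<Rightarrow> ('q \<Rightarrow> 'k)" where
  "sF c g = (\<lambda>q. c * g q)"

lemma kmod_sF: "kmod sF"
  unfolding kmod_def sF_def by (auto simp: fun_eq_iff algebra_simps)

lemma submod_kspan: "submod sF (kspan R)"
  unfolding submod_def sF_def
  using kspan_zero[of R] kspan_add[of _ R] kspan_scal[of _ R]
  by (auto simp: zero_fun_def plus_fun_def)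

lemma formal_concat: "formal (concat (map f xs)) = sum_list (map (\<lambda>p. formal (f p)) xs)"
  by (induction xs) (auto simp: formal_Nil formal_append zero_fun_def plus_fun_def)

lemma diff_fun_lam: "(f::'q \<Rightarrow> 'k::ab_group_add) - g = (\<lambda>q. f q - g q)" by (simp add: fun_diff_def)

section \<open>Pushforward lemmas\<close>

lemma teq2_push:
  fixes \<Phi> :: "'x::ab_group_add \<Rightarrow> 'y::ab_group_add \<Rightarrow> ('u::ab_group_add \<times> 'v::ab_group_add) list"
    and s1 :: "'k::comm_ring_1 \<Rightarrow> 'x \<Rightarrow> 'x"
  assumes h: "teq2 s1 s2 xs ys"
    and a1: "\<And>x x' y. teq2 t1 t2 (\<Phi> (x + x') y) (\<Phi> x y @ \<Phi> x' y)"
    and a2: "\<And>x y y'. teq2 t1 t2 (\<Phi> x (y + y')) (\<Phi> x y @ \<Phi> x y')"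
    and a3: "\<And>c x y. teq2 t1 t2 (\<Phi> (s1 c x) y) (map (\<lambda>(a, b). (t1 c a, b)) (\<Phi> x y))"
    and a4: "\<And>c x y. teq2 t1 t2 (\<Phi> x (s2 c y)) (map (\<lambda>(a, b). (t1 c a, b)) (\<Phi> x y))"
  shows "teq2 t1 t2 (concat (map (\<lambda>(a, b). \<Phi> a b) xs)) (concat (map (\<lambda>(a, b). \<Phi> a b) ys))"
proof -
  let ?e = "\<lambda>p. formal (case p of (a, b) \<Rightarrow> \<Phi> a b) :: 'u \<times> 'v \<Rightarrow> 'k"
  let ?K = "kspan (rel2 t1 t2)"
  have sc: "\<And>c x y. ?e (s1 c x, y) - sF c (?e (x, y)) \<in> ?K"
  proof -
    fix c x y
    show "?e (s1 c x, y) - sF c (?e (x, y)) \<in> ?K"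
      using kspan_add[OF a3[where c=c and x=x and y=y, unfolded teq2_def] formal_sc[of t1 c "\<Phi> x y" t2]]
      by (elim kspan_ext) (simp add: sF_def fun_diff_def)
  qed
  have sc2: "\<And>c x y. ?e (x, s2 c y) - sF c (?e (x, y)) \<in> ?K"
  proof -
    fix c x y
    show "?e (x, s2 c y) - sF c (?e (x, y)) \<in> ?K"
      using kspan_add[OF a4[where c=c and x=x and y=y, unfolded teq2_def] formal_sc[of t1 c "\<Phi> x y" t2]]
      by (elim kspan_ext) (simp add: sF_def fun_diff_def)
  qed
  have c1: "\<And>x x' y. ?e (x + x', y) - (?e (x, y) + ?e (x', y)) \<in> ?K"
  proof -
    fix x x' y show "?e (x + x', y) - (?e (x, y) + ?e (x', y)) \<in> ?K"
      using a1[where x=x and x'=x' and y=y, unfolded teq2_def] by (simp add: formal_append plus_fun_def fun_diff_def)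
  qed
  have c2: "\<And>x y y'. ?e (x, y + y') - (?e (x, y) + ?e (x, y')) \<in> ?K"
  proof -
    fix x y y' show "?e (x, y + y') - (?e (x, y) + ?e (x, y')) \<in> ?K"
      using a2[where x=x and y=y and y'=y', unfolded teq2_def] by (simp add: formal_append plus_fun_def fun_diff_def)
  qed
  have "sum_list (map ?e xs) - sum_list (map ?e ys) \<in> ?K"
    by (rule GL[OF kmod_sF submod_kspan rel2_LinF[OF kmod_sF submod_kspan c1 c2 sc sc2] h[unfolded teq2_def]])
  then show ?thesis unfolding teq2_def formal_concat by (simp add: fun_diff_def)
qed


lemma teq3_push:
  fixes \<Phi> :: "'x::ab_group_add \<Rightarrow> 'y::ab_group_add \<Rightarrow> 'z::ab_group_add \<Rightarrow> ('u::ab_group_add \<times> 'v::ab_group_add) list"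
    and s1 :: "'k::comm_ring_1 \<Rightarrow> 'x \<Rightarrow> 'x"
  assumes h: "teq3 s1 s2 s3 xs ys"
    and a1: "\<And>x x' y z. teq2 t1 t2 (\<Phi> (x + x') y z) (\<Phi> x y z @ \<Phi> x' y z)"
    and a2: "\<And>x y y' z. teq2 t1 t2 (\<Phi> x (y + y') z) (\<Phi> x y z @ \<Phi> x y' z)"
    and a3: "\<And>x y z z'. teq2 t1 t2 (\<Phi> x y (z + z')) (\<Phi> x y z @ \<Phi> x y z')"
    and a4: "\<And>c x y z. teq2 t1 t2 (\<Phi> (s1 c x) y z) (map (\<lambda>(a, b). (t1 c a, b)) (\<Phi> x y z))"
    and a5: "\<And>c x y z. teq2 t1 t2 (\<Phi> x (s2 c y) z) (map (\<lambda>(a, b). (t1 c a, b)) (\<Phi> x y z))"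
    and a6: "\<And>c x y z. teq2 t1 t2 (\<Phi> x y (s3 c z)) (map (\<lambda>(a, b). (t1 c a, b)) (\<Phi> x y z))"
  shows "teq2 t1 t2 (concat (map (\<lambda>(a, b, c). \<Phi> a b c) xs)) (concat (map (\<lambda>(a, b, c). \<Phi> a b c) ys))"
proof -
  let ?e = "\<lambda>p. formal (case p of (a, b, c) \<Rightarrow> \<Phi> a b c) :: 'u \<times> 'v \<Rightarrow> 'k"
  let ?K = "kspan (rel2 t1 t2)"
  have c1: "\<And>x x' y z. ?e (x + x', y, z) - (?e (x, y, z) + ?e (x', y, z)) \<in> ?K"
  proof -
    fix x x' y z show "?e (x + x', y, z) - (?e (x, y, z) + ?e (x', y, z)) \<in> ?K"
      using a1[where x=x and x'=x' and y=y and z=z, unfolded teq2_def] by (simp add: formal_append plus_fun_def fun_diff_def)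
  qed
  have c2: "\<And>x y y' z. ?e (x, y + y', z) - (?e (x, y, z) + ?e (x, y', z)) \<in> ?K"
  proof -
    fix x y y' z show "?e (x, y + y', z) - (?e (x, y, z) + ?e (x, y', z)) \<in> ?K"
      using a2[where x=x and y=y and y'=y' and z=z, unfolded teq2_def] by (simp add: formal_append plus_fun_def fun_diff_def)
  qed
  have c3: "\<And>x y z z'. ?e (x, y, z + z') - (?e (x, y, z) + ?e (x, y, z')) \<in> ?K"
  proof -
    fix x y z z' show "?e (x, y, z + z') - (?e (x, y, z) + ?e (x, y, z')) \<in> ?K"
      using a3[where x=x and y=y and z=z and z'=z', unfolded teq2_def] by (simp add: formal_append plus_fun_def fun_diff_def)
  qed
  have c4: "\<And>c x y z. ?e (s1 c x, y, z) - sF c (?e (x, y, z)) \<in> ?K"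
  proof -
    fix c x y z
    show "?e (s1 c x, y, z) - sF c (?e (x, y, z)) \<in> ?K"
      using kspan_add[OF a4[where c=c and x=x and y=y and z=z, unfolded teq2_def] formal_sc[of t1 c "\<Phi> x y z" t2]]
      by (elim kspan_ext) (simp add: sF_def fun_diff_def)
  qed
  have c5: "\<And>c x y z. ?e (x, s2 c y, z) - sF c (?e (x, y, z)) \<in> ?K"
  proof -
    fix c x y z
    show "?e (x, s2 c y, z) - sF c (?e (x, y, z)) \<in> ?K"
      using kspan_add[OF a5[where c=c and x=x and y=y and z=z, unfolded teq2_def] formal_sc[of t1 c "\<Phi> x y z" t2]]
      by (elim kspan_ext) (simp add: sF_def fun_diff_def)
  qed
  have c6: "\<And>c x y z. ?e (x, y, s3 c z) - sF c (?e (x, y, z)) \<in> ?K"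
  proof -
    fix c x y z
    show "?e (x, y, s3 c z) - sF c (?e (x, y, z)) \<in> ?K"
      using kspan_add[OF a6[where c=c and x=x and y=y and z=z, unfolded teq2_def] formal_sc[of t1 c "\<Phi> x y z" t2]]
      by (elim kspan_ext) (simp add: sF_def fun_diff_def)
  qed
  have "sum_list (map ?e xs) - sum_list (map ?e ys) \<in> ?K"
    by (rule GL[OF kmod_sF submod_kspan rel3_LinF[OF kmod_sF submod_kspan c1 c2 c3 c4 c5 c6] h[unfolded teq3_def]])
  then show ?thesis unfolding teq2_def formal_concat by (simp add: fun_diff_def)
qed

lemma submod_zero: "kmod s \<Longrightarrow> submod s {0}"
  by (simp add: submod_def kmod_zero)

lemma teq2_sum:
  fixes f :: "'x::ab_group_add \<Rightarrow> 'y::ab_group_add \<Rightarrow> 'z::ab_group_add"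
    and s1 :: "'k::comm_ring_1 \<Rightarrow> 'x \<Rightarrow> 'x"
  assumes km: "kmod sZ" and h: "teq2 s1 s2 xs ys"
    and l1: "\<And>y. klin s1 sZ (\<lambda>x. f x y)" and l2: "\<And>x. klin s2 sZ (f x)"
  shows "sum_list (map (\<lambda>(a, b). f a b) xs) = sum_list (map (\<lambda>(a, b). f a b) ys)"
proof -
  let ?e = "\<lambda>p. case p of (a, b) \<Rightarrow> f a b"
  have "sum_list (map ?e xs) - sum_list (map ?e ys) \<in> {0}"
  proof (rule GL[OF km submod_zero[OF km] rel2_LinF[OF km submod_zero[OF km]] h[unfolded teq2_def]])
    fix x x' y show "?e (x + x', y) - (?e (x, y) + ?e (x', y)) \<in> {0}" using klin_add[OF l1] by simp
  next
    fix x y y' show "?e (x, y + y') - (?e (x, y) + ?e (x, y')) \<in> {0}" using klin_add[OF l2] by simp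
  next
    fix c x y show "?e (s1 c x, y) - sZ c (?e (x, y)) \<in> {0}" using klin_scal[OF l1] by simp
  next
    fix c x y show "?e (x, s2 c y) - sZ c (?e (x, y)) \<in> {0}" using klin_scal[OF l2] by simp
  qed
  then show ?thesis by simp
qed

lemma teq3_sum:
  fixes f :: "'x::ab_group_add \<Rightarrow> 'y::ab_group_add \<Rightarrow> 'w::ab_group_add \<Rightarrow> 'z::ab_group_add"
    and s1 :: "'k::comm_ring_1 \<Rightarrow> 'x \<Rightarrow> 'x"
  assumes km: "kmod sZ" and h: "teq3 s1 s2 s3 xs ys"
    and l1: "\<And>y z. klin s1 sZ (\<lambda>x. f x y z)" and l2: "\<And>x z. klin s2 sZ (\<lambda>y. f x y z)"
    and l3: "\<And>x y. klin s3 sZ (f x y)"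
  shows "sum_list (map (\<lambda>(a, b, c). f a b c) xs) = sum_list (map (\<lambda>(a, b, c). f a b c) ys)"
proof -
  let ?e = "\<lambda>p. case p of (a, b, c) \<Rightarrow> f a b c"
  have "sum_list (map ?e xs) - sum_list (map ?e ys) \<in> {0}"
  proof (rule GL[OF km submod_zero[OF km] rel3_LinF[OF km submod_zero[OF km]] h[unfolded teq3_def]])
    fix x x' y z show "?e (x + x', y, z) - (?e (x, y, z) + ?e (x', y, z)) \<in> {0}" using klin_add[OF l1] by simp
  next
    fix x y y' z show "?e (x, y + y', z) - (?e (x, y, z) + ?e (x, y', z)) \<in> {0}" using klin_add[OF l2] by simp
  next
    fix x y z z' show "?e (x, y, z + z') - (?e (x, y, z) + ?e (x, y, z')) \<in> {0}" using klin_add[OF l3] by simp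
  next
    fix c x y z show "?e (s1 c x, y, z) - sZ c (?e (x, y, z)) \<in> {0}" using klin_scal[OF l1] by simp
  next
    fix c x y z show "?e (x, s2 c y, z) - sZ c (?e (x, y, z)) \<in> {0}" using klin_scal[OF l2] by simp
  next
    fix c x y z show "?e (x, y, s3 c z) - sZ c (?e (x, y, z)) \<in> {0}" using klin_scal[OF l3] by simp
  qed
  then show ?thesis by simp
qed

abbreviation scl :: "('k \<Rightarrow> 'x \<Rightarrow> 'x) \<Rightarrow> 'k \<Rightarrow> ('x \<times> 'y) list \<Rightarrow> ('x \<times> 'y) list" where
  "scl s c xs \<equiv> map (\<lambda>(a, b). (s c a, b)) xs"

lemma teq2_scl_cong:
  assumes km: "kmod s1" and h: "teq2 s1 s2 xs ys"
  shows "teq2 s1 s2 (scl s1 c xs) (scl s1 c ys)"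
proof -
  have calc: "teq2 s1 s2 (concat (map (\<lambda>(a, b). [(s1 c a, b)]) xs)) (concat (map (\<lambda>(a, b). [(s1 c a, b)]) ys))"
  proof (rule teq2_push[OF h])
    fix x x' y show "teq2 s1 s2 [(s1 c (x + x'), y)] ([(s1 c x, y)] @ [(s1 c x', y)])"
      using teq2_addL[of s1 s2 "s1 c x" "s1 c x'" y] by (simp add: kmod_add[OF km])
  next
    fix x y y' show "teq2 s1 s2 [(s1 c x, y + y')] ([(s1 c x, y)] @ [(s1 c x, y')])"
      using teq2_addR by simp
  next
    fix d x y show "teq2 s1 s2 [(s1 c (s1 d x), y)] (scl s1 d [(s1 c x, y)])"
      by (simp add: kmod_comp[OF km] mult.commute teq2_refl)
  next
    fix d x y show "teq2 s1 s2 [(s1 c x, s2 d y)] (scl s1 d [(s1 c x, y)])"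
      using teq2_sym[OF teq2_scLR[of s1 s2 d "s1 c x" y]] by simp
  qed
  have e: "\<And>zs. concat (map (\<lambda>(a, b). [(s1 c a, b)]) zs) = scl s1 c zs"
    by (induct_tac zs) auto
  from calc[unfolded e] show ?thesis .
qed

lemma teq2_scl_concat: "scl s c (concat xss) = concat (map (scl s c) xss)"
  by (simp add: map_concat)

section \<open>Tensor multiplication\<close>

lemma tmul_Nil[simp]: "tmul [] ys = []" by (simp add: tmul_def)
lemma tmul_Cons: "tmul (p # xs) ys = map (\<lambda>(c, d). (fst p * c, snd p * d)) ys @ tmul xs ys"
  by (cases p) (simp add: tmul_def case_prod_beta)
lemma tmul_append_left: "tmul (xs @ xs') ys = tmul xs ys @ tmul xs' ys"
  by (induction xs) (simp_all add: tmul_Cons)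
lemma tmul_concat_left: "tmul (concat xss) ys = concat (map (\<lambda>xs. tmul xs ys) xss)"
  by (induction xss) (simp_all add: tmul_append_left)
lemma tmul_single_left: "tmul [(a, b)] ys = map (\<lambda>(c, d). (a * c, b * d)) ys"
  by (simp add: tmul_Cons)
lemma tmul_Nil_right[simp]: "tmul xs [] = []" by (induction xs) (simp_all add: tmul_Cons)
lemma tmul_single_right: "tmul xs [(c, d)] = map (\<lambda>(a, b). (a * c, b * d)) xs"
  by (induction xs) (auto simp: tmul_Cons)
lemma mset_tmul_append_right: "mset (tmul xs (ys @ zs)) = mset (tmul xs ys @ tmul xs zs)"
  by (induction xs) (auto simp: tmul_Cons)
lemma tmul_append_right: "teq2 s1 s2 (tmul xs (ys @ zs)) (tmul xs ys @ tmul xs zs)"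
  by (rule teq2_mset[OF mset_tmul_append_right])
lemma mset_tmul_concat_right: "mset (tmul xs (concat yss)) = mset (concat (map (\<lambda>ys. tmul xs ys) yss))"
  by (induction yss) (simp_all add: mset_tmul_append_right)
lemma tmul_concat_right: "teq2 s1 s2 (tmul xs (concat yss)) (concat (map (\<lambda>ys. tmul xs ys) yss))"
  by (rule teq2_mset[OF mset_tmul_concat_right])

lemma tmul_map_left: "tmul (map (\<lambda>(c, d). (a * c, b * d)) ys) zs = map (\<lambda>(c, d). (a * c, b * d)) (tmul ys zs)"
  for a :: "'a::ring_1" and b :: "'b::ring_1"
  by (induction ys) (auto simp: tmul_Cons mult.assoc)

lemma tmul_assoc: "tmul (tmul xs ys) zs = tmul xs (tmul ys zs)"
  for xs :: "('a::ring_1 \<times> 'b::ring_1) list"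
  by (induction xs) (auto simp: tmul_Cons tmul_append_left tmul_map_left case_prod_beta)

lemma tmul_one_right: "tmul xs [(1, 1)] = xs"
  for xs :: "('a::ring_1 \<times> 'b::ring_1) list"
  by (induction xs) (auto simp: tmul_Cons)

lemma tmul_one_left: "tmul [(1, 1)] xs = xs"
  for xs :: "('a::ring_1 \<times> 'b::ring_1) list"
  by (simp add: tmul_single_left case_prod_beta)

lemma kalg_kmod: "kalg s \<Longrightarrow> kmod s" by (simp add: kalg_def)
lemma kalg_left: "kalg s \<Longrightarrow> s c x * y = s c (x * y)" unfolding kalg_def by metis
lemma kalg_right: "kalg s \<Longrightarrow> x * s c y = s c (x * y)" unfolding kalg_def by metis

lemma tmul_scl_left: "kalg s1 \<Longrightarrow> tmul (scl s1 c xs) ys = scl s1 c (tmul xs ys)"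
  by (induction xs) (auto simp: tmul_Cons kalg_left)

lemma tmul_scl_right: "kalg s1 \<Longrightarrow> tmul xs (scl s1 c ys) = scl s1 c (tmul xs ys)"
  by (induction xs) (auto simp: tmul_Cons kalg_right)

lemma concat_pair2: "teq2 s1 s2 (concat (map (\<lambda>(c, d). [f c d, g c d]) L)) (map (\<lambda>(c, d). f c d) L @ map (\<lambda>(c, d). g c d) L)"
  by (rule teq2_mset) (induction L, auto)

lemma tmul_cong_left:
  fixes xs :: "('a::ring_1 \<times> 'b::ring_1) list"
  assumes a1: "kalg s1" and a2: "kalg s2" and h: "teq2 s1 s2 xs xs'"
  shows "teq2 s1 s2 (tmul xs ys) (tmul xs' ys)"
proof -
  let ?\<Phi> = "\<lambda>a b. map (\<lambda>(c, d). (a * c, b * d)) ys"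
  have "teq2 s1 s2 (concat (map (\<lambda>(a, b). ?\<Phi> a b) xs)) (concat (map (\<lambda>(a, b). ?\<Phi> a b) xs'))"
  proof (rule teq2_push[OF h])
    fix x x' y
    have h1: "teq2 s1 s2 (concat (map (\<lambda>(c, d). [((x + x') * c, y * d)]) ys))
                     (concat (map (\<lambda>(c, d). [(x * c, y * d), (x' * c, y * d)]) ys))"
      by (rule teq2_concat) (auto simp: distrib_right teq2_addL)
    have h2: "concat (map (\<lambda>(c, d). [((x + x') * c, y * d)]) ys) = ?\<Phi> (x + x') y"
      by (induction ys) auto
    have h3: "teq2 s1 s2 (concat (map (\<lambda>(c, d). [(x * c, y * d), (x' * c, y * d)]) ys)) (?\<Phi> x y @ ?\<Phi> x' y)"
      by (rule concat_pair2)
    show "teq2 s1 s2 (?\<Phi> (x + x') y) (?\<Phi> x y @ ?\<Phi> x' y)" using teq2_trans[OF h1 h3, unfolded h2] .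
  next
    fix x y y'
    have h1: "teq2 s1 s2 (concat (map (\<lambda>(c, d). [(x * c, (y + y') * d)]) ys))
                     (concat (map (\<lambda>(c, d). [(x * c, y * d), (x * c, y' * d)]) ys))"
      by (rule teq2_concat) (auto simp: distrib_right teq2_addR)
    have h2: "concat (map (\<lambda>(c, d). [(x * c, (y + y') * d)]) ys) = ?\<Phi> x (y + y')"
      by (induction ys) auto
    have h3: "teq2 s1 s2 (concat (map (\<lambda>(c, d). [(x * c, y * d), (x * c, y' * d)]) ys)) (?\<Phi> x y @ ?\<Phi> x y')"
      by (rule concat_pair2)
    show "teq2 s1 s2 (?\<Phi> x (y + y')) (?\<Phi> x y @ ?\<Phi> x y')" using teq2_trans[OF h1 h3, unfolded h2] .
  next
    fix c x y
    have e: "scl s1 c (?\<Phi> x y) = ?\<Phi> (s1 c x) y" by (induction ys) (auto simp: kalg_left[OF a1])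
    show "teq2 s1 s2 (?\<Phi> (s1 c x) y) (scl s1 c (?\<Phi> x y))" unfolding e by (rule teq2_refl)
  next
    fix c x y
    have h: "teq2 s1 s2 (concat (map (\<lambda>(e, d). [(x * e, s2 c y * d)]) ys))
                     (concat (map (\<lambda>(e, d). [(s1 c (x * e), y * d)]) ys))"
      by (rule teq2_concat) (auto simp: kalg_left[OF a2] intro: teq2_sym[OF teq2_scLR])
    have e1: "concat (map (\<lambda>(e, d). [(x * e, s2 c y * d)]) ys) = ?\<Phi> x (s2 c y)"
      by (induction ys) auto
    have e2: "concat (map (\<lambda>(e, d). [(s1 c (x * e), y * d)]) ys) = scl s1 c (?\<Phi> x y)"
      by (induction ys) auto
    show "teq2 s1 s2 (?\<Phi> x (s2 c y)) (scl s1 c (?\<Phi> x y))" using h unfolding e1 e2 .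
  qed
  moreover have "\<And>zs. concat (map (\<lambda>(a, b). ?\<Phi> a b) zs) = tmul zs ys"
    by (induct_tac zs) (auto simp: tmul_Cons case_prod_beta)
  ultimately show ?thesis by simp
qed


lemma mset_tmul_singles: "mset (concat (map (\<lambda>(c, d). tmul xs [(c, d)]) ys)) = mset (tmul xs ys)"
proof -
  have "ys = concat (map (\<lambda>p. [p]) ys)" by (induction ys) auto
  then have "mset (tmul xs ys) = mset (concat (map (\<lambda>p. tmul xs [p]) ys))"
    using mset_tmul_concat_right[of xs "map (\<lambda>p. [p]) ys"] by (simp add: comp_def)
  moreover have "(\<lambda>(c, d). tmul xs [(c, d)]) = (\<lambda>p. tmul xs [p])" by (rule ext) auto
  ultimately show ?thesis by simp
qed

lemma tmul_cong_right:
  fixes xs :: "('a::ring_1 \<times> 'b::ring_1) list"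
  assumes a1: "kalg s1" and a2: "kalg s2" and h: "teq2 s1 s2 ys ys'"
  shows "teq2 s1 s2 (tmul xs ys) (tmul xs ys')"
proof -
  let ?\<Phi> = "\<lambda>c d. map (\<lambda>(a, b). (a * c, b * d)) xs"
  have calc: "teq2 s1 s2 (concat (map (\<lambda>(a, b). ?\<Phi> a b) ys)) (concat (map (\<lambda>(a, b). ?\<Phi> a b) ys'))"
  proof (rule teq2_push[OF h])
    fix x x' y
    have h1: "teq2 s1 s2 (concat (map (\<lambda>(c, d). [(c * (x + x'), d * y)]) xs))
                     (concat (map (\<lambda>(c, d). [(c * x, d * y), (c * x', d * y)]) xs))"
      by (rule teq2_concat) (auto simp: distrib_left teq2_addL)
    have h2: "concat (map (\<lambda>(c, d). [(c * (x + x'), d * y)]) xs) = ?\<Phi> (x + x') y"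
      by (induction xs) auto
    have h3: "teq2 s1 s2 (concat (map (\<lambda>(c, d). [(c * x, d * y), (c * x', d * y)]) xs)) (?\<Phi> x y @ ?\<Phi> x' y)"
      by (rule concat_pair2)
    show "teq2 s1 s2 (?\<Phi> (x + x') y) (?\<Phi> x y @ ?\<Phi> x' y)" using teq2_trans[OF h1 h3, unfolded h2] .
  next
    fix x y y'
    have h1: "teq2 s1 s2 (concat (map (\<lambda>(c, d). [(c * x, d * (y + y'))]) xs))
                     (concat (map (\<lambda>(c, d). [(c * x, d * y), (c * x, d * y')]) xs))"
      by (rule teq2_concat) (auto simp: distrib_left teq2_addR)
    have h2: "concat (map (\<lambda>(c, d). [(c * x, d * (y + y'))]) xs) = ?\<Phi> x (y + y')"
      by (induction xs) auto
    have h3: "teq2 s1 s2 (concat (map (\<lambda>(c, d). [(c * x, d * y), (c * x, d * y')]) xs)) (?\<Phi> x y @ ?\<Phi> x y')"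
      by (rule concat_pair2)
    show "teq2 s1 s2 (?\<Phi> x (y + y')) (?\<Phi> x y @ ?\<Phi> x y')" using teq2_trans[OF h1 h3, unfolded h2] .
  next
    fix c x y
    have e: "scl s1 c (?\<Phi> x y) = ?\<Phi> (s1 c x) y" by (induction xs) (auto simp: kalg_right[OF a1])
    show "teq2 s1 s2 (?\<Phi> (s1 c x) y) (scl s1 c (?\<Phi> x y))" unfolding e by (rule teq2_refl)
  next
    fix c x y
    have h: "teq2 s1 s2 (concat (map (\<lambda>(e, d). [(e * x, d * s2 c y)]) xs))
                     (concat (map (\<lambda>(e, d). [(s1 c (e * x), d * y)]) xs))"
      by (rule teq2_concat) (auto simp: kalg_right[OF a2] intro: teq2_sym[OF teq2_scLR])
    have e1: "concat (map (\<lambda>(e, d). [(e * x, d * s2 c y)]) xs) = ?\<Phi> x (s2 c y)"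
      by (induction xs) auto
    have e2: "concat (map (\<lambda>(e, d). [(s1 c (e * x), d * y)]) xs) = scl s1 c (?\<Phi> x y)"
      by (induction xs) auto
    show "teq2 s1 s2 (?\<Phi> x (s2 c y)) (scl s1 c (?\<Phi> x y))" using h unfolding e1 e2 .
  qed
  have e: "\<And>zs. concat (map (\<lambda>(a, b). ?\<Phi> a b) zs) = concat (map (\<lambda>(c, d). tmul xs [(c, d)]) zs)"
    by (simp add: tmul_single_right)
  have "teq2 s1 s2 (tmul xs ys) (concat (map (\<lambda>(a, b). ?\<Phi> a b) ys))"
    unfolding e by (rule teq2_mset) (simp add: mset_tmul_singles)
  moreover have "teq2 s1 s2 (concat (map (\<lambda>(a, b). ?\<Phi> a b) ys')) (tmul xs ys')"
    unfolding e by (rule teq2_mset) (simp add: mset_tmul_singles)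
  ultimately show ?thesis using calc teq2_trans by blast
qed

lemma tmul_cong: "kalg s1 \<Longrightarrow> kalg s2 \<Longrightarrow> teq2 s1 s2 xs xs' \<Longrightarrow> teq2 s1 s2 ys ys' \<Longrightarrow>
   teq2 s1 s2 (tmul xs ys) (tmul xs' ys')"
  for xs :: "('a::ring_1 \<times> 'b::ring_1) list"
  using tmul_cong_left tmul_cong_right teq2_trans by blast


lemma sum_list_concat_map: "sum_list (map f (concat xss)) = sum_list (map (\<lambda>xs. sum_list (map f xs)) xss)"
  by (induction xss) auto

lemma dl_sum: "sum_list (map (\<lambda>(x, y, z). f x y z) (dl D xs))
   = sum_list (map (\<lambda>(a, b). sum_list (map (\<lambda>(a1, a2). f a1 a2 b) (D a))) xs)"
  unfolding dl_def sum_list_concat_map by (simp add: comp_def case_prod_unfold)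

lemma dr_sum: "sum_list (map (\<lambda>(x, y, z). f x y z) (dr D xs))
   = sum_list (map (\<lambda>(a, b). sum_list (map (\<lambda>(b1, b2). f a b1 b2) (D b))) xs)"
  unfolding dr_def sum_list_concat_map by (simp add: comp_def case_prod_unfold)

lemma dl_concat: "concat (map (\<lambda>(x, y, z). f x y z) (dl D xs))
   = concat (map (\<lambda>(a, b). concat (map (\<lambda>(a1, a2). f a1 a2 b) (D a))) xs)"
  unfolding dl_def by (induction xs) (auto simp: map_concat comp_def case_prod_unfold)

lemma dr_concat: "concat (map (\<lambda>(x, y, z). f x y z) (dr D xs))
   = concat (map (\<lambda>(a, b). concat (map (\<lambda>(b1, b2). f a b1 b2) (D b))) xs)"
  unfolding dr_def by (induction xs) (auto simp: map_concat comp_def case_prod_unfold)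

lemma tmul_sum: "sum_list (map (\<lambda>(a, b). f a b) (tmul xs ys))
   = sum_list (map (\<lambda>(a, b). sum_list (map (\<lambda>(c, d). f (a * c) (b * d)) ys)) xs)"
  by (induction xs) (auto simp: tmul_Cons comp_def case_prod_unfold)

lemma sum_list_mult_right: "sum_list (map f xs) * c = sum_list (map (\<lambda>x. f x * c) xs)"
  for c :: "'r::ring_1" by (induction xs) (auto simp: distrib_right)
lemma sum_list_mult_left: "c * sum_list (map f xs) = sum_list (map (\<lambda>x. c * f x) xs)"
  for c :: "'r::ring_1" by (induction xs) (auto simp: distrib_left)

lemma klin_mult_right: "kalg s \<Longrightarrow> klin sH s g \<Longrightarrow> klin sH s (\<lambda>x. g x * c)"
  unfolding klin_def by (auto simp: distrib_right kalg_left)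
lemma klin_mult_left: "kalg s \<Longrightarrow> klin sH s g \<Longrightarrow> klin sH s (\<lambda>x. c * g x)"
  unfolding klin_def by (auto simp: distrib_left kalg_right)
lemma klin_comp: "klin s1 s2 f \<Longrightarrow> klin s0 s1 g \<Longrightarrow> klin s0 s2 (\<lambda>x. f (g x))"
  unfolding klin_def by auto
lemma klin_id: "klin s s (\<lambda>x. x)" unfolding klin_def by auto
lemma klin_sum_par: "kmod sZ \<Longrightarrow> (\<And>l. l \<in> set L \<Longrightarrow> klin s sZ (g l)) \<Longrightarrow>
    klin s sZ (\<lambda>x. sum_list (map (\<lambda>l. g l x) L))"
proof (induction L)
  case Nil then show ?case by (simp add: klin_def kmod_zero)
next
  case (Cons a L)
  then have "klin s sZ (g a)" "klin s sZ (\<lambda>x. sum_list (map (\<lambda>l. g l x) L))" by auto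
  then show ?case using Cons.prems(1) unfolding klin_def by (auto simp: kmod_add algebra_simps)
qed

locale hctx =
  fixes sH :: "'k::comm_ring_1 \<Rightarrow> 'h::ring_1 \<Rightarrow> 'h" and Delta :: "'h \<Rightarrow> ('h \<times> 'h) list"
    and eps :: "'h \<Rightarrow> 'k" and S :: "'h \<Rightarrow> 'h"
    and sA :: "'k \<Rightarrow> 'a::ring_1 \<Rightarrow> 'a" and rho :: "'a \<Rightarrow> ('a \<times> 'h) list"
  assumes hopf: "hopf_alg sH Delta eps S" and comod: "comod_alg sH Delta eps sA rho"
begin

lemma kalgH: "kalg sH" using hopf by (simp add: hopf_alg_def)
lemma kmodH: "kmod sH" using kalgH by (rule kalg_kmod)
lemma kalgA: "kalg sA" using comod by (simp add: comod_alg_def)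
lemma kmodA: "kmod sA" using kalgA by (rule kalg_kmod)
lemma D_add: "teq2 sH sH (Delta (x + y)) (Delta x @ Delta y)" using hopf by (simp add: hopf_alg_def)
lemma D_scal: "teq2 sH sH (Delta (sH c x)) (scl sH c (Delta x))" using hopf by (simp add: hopf_alg_def)
lemma D_coassoc: "teq3 sH sH sH (dl Delta (Delta h)) (dr Delta (Delta h))" using hopf by (simp add: hopf_alg_def)
lemma eps_lin: "klin sH (\<lambda>c d. c * d) eps" using hopf by (simp add: hopf_alg_def)
lemma counitL: "sum_list (map (\<lambda>(a, b). sH (eps a) b) (Delta h)) = h" using hopf by (simp add: hopf_alg_def)
lemma counitR: "sum_list (map (\<lambda>(a, b). sH (eps b) a) (Delta h)) = h" using hopf by (simp add: hopf_alg_def)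
lemma D_mult: "teq2 sH sH (Delta (x * y)) (tmul (Delta x) (Delta y))" using hopf by (simp add: hopf_alg_def)
lemma D_one: "teq2 sH sH (Delta 1) [(1, 1)]" using hopf by (simp add: hopf_alg_def)
lemma eps_mult: "eps (x * y) = eps x * eps y" using hopf by (simp add: hopf_alg_def)
lemma eps_one: "eps 1 = 1" using hopf by (simp add: hopf_alg_def)
lemma S_lin: "klin sH sH S" using hopf by (simp add: hopf_alg_def)
lemma antiL: "sum_list (map (\<lambda>(a, b). S a * b) (Delta h)) = sH (eps h) 1" using hopf by (simp add: hopf_alg_def)
lemma antiR: "sum_list (map (\<lambda>(a, b). a * S b) (Delta h)) = sH (eps h) 1" using hopf by (simp add: hopf_alg_def)
lemma rho_add: "teq2 sA sH (rho (x + y)) (rho x @ rho y)" using comod by (simp add: comod_alg_def)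
lemma rho_scal: "teq2 sA sH (rho (sA c x)) (scl sA c (rho x))" using comod by (simp add: comod_alg_def)
lemma rho_coassoc: "teq3 sA sH sH (dl rho (rho a)) (dr Delta (rho a))" using comod by (simp add: comod_alg_def)
lemma rho_counit: "sum_list (map (\<lambda>(x, h). sA (eps h) x) (rho a)) = a" using comod by (simp add: comod_alg_def)
lemma rho_mult: "teq2 sA sH (rho (x * y)) (tmul (rho x) (rho y))" using comod by (simp add: comod_alg_def)
lemma rho_one: "teq2 sA sH (rho 1) [(1, 1)]" using comod by (simp add: comod_alg_def)

lemma eps_add: "eps (x + y) = eps x + eps y" using eps_lin by (rule klin_add)
lemma eps_scal: "eps (sH c x) = c * eps x" using klin_scal[OF eps_lin] by simp

definition Sw :: "'h \<Rightarrow> ('h \<Rightarrow> 'h \<Rightarrow> 'z::ab_group_add) \<Rightarrow> 'z" where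
  "Sw h f = sum_list (map (\<lambda>(a, b). f a b) (Delta h))"

lemma conv_Sw: "conv Delta f g h = Sw h (\<lambda>a b. f a * g b)"
  by (simp add: conv_def Sw_def)

lemma Sw_add:
  assumes km: "kmod sZ" and l1: "\<And>b. klin sH sZ (\<lambda>a. f a b)" and l2: "\<And>a. klin sH sZ (f a)"
  shows "Sw (x + y) f = Sw x f + Sw y f"
  using teq2_sum[OF km D_add l1 l2] by (simp add: Sw_def)

lemma Sw_scal:
  assumes km: "kmod sZ" and l1: "\<And>b. klin sH sZ (\<lambda>a. f a b)" and l2: "\<And>a. klin sH sZ (f a)"
  shows "Sw (sH c x) f = sZ c (Sw x f)"
proof -
  have "Sw (sH c x) f = sum_list (map (\<lambda>(a, b). f a b) (scl sH c (Delta x)))"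
    using teq2_sum[OF km D_scal l1 l2] by (simp add: Sw_def)
  also have "\<dots> = sum_list (map (\<lambda>(a, b). sZ c (f a b)) (Delta x))"
    by (simp add: comp_def case_prod_unfold klin_scal[OF l1])
  also have "\<dots> = sZ c (Sw x f)" by (simp add: Sw_def kmod_sum_list[OF km] case_prod_unfold)
  finally show ?thesis .
qed

lemma klin_Sw:
  assumes km: "kmod sZ" and l1: "\<And>b. klin sH sZ (\<lambda>a. f a b)" and l2: "\<And>a. klin sH sZ (f a)"
  shows "klin sH sZ (\<lambda>x. Sw x f)"
  unfolding klin_def using Sw_add[OF km l1 l2] Sw_scal[OF km l1 l2] by auto

lemma klin_Sw_par:
  assumes km: "kmod sZ" and l: "\<And>a b. klin s sZ (\<lambda>x. g a b x)"
  shows "klin s sZ (\<lambda>x. Sw h (\<lambda>a b. g a b x))"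
  unfolding Sw_def using klin_sum_par[OF km, of "Delta h" s "\<lambda>p x. case p of (a, b) \<Rightarrow> g a b x"] l
  by (auto simp: case_prod_unfold)

lemma Sw_coassoc:
  assumes km: "kmod sZ"
    and l1: "\<And>y z. klin sH sZ (\<lambda>x. f x y z)" and l2: "\<And>x z. klin sH sZ (\<lambda>y. f x y z)"
    and l3: "\<And>x y. klin sH sZ (f x y)"
  shows "Sw h (\<lambda>a b. Sw a (\<lambda>a1 a2. f a1 a2 b)) = Sw h (\<lambda>a b. Sw b (\<lambda>b1 b2. f a b1 b2))"
  using teq3_sum[OF km D_coassoc l1 l2 l3] unfolding dl_sum dr_sum Sw_def .

lemma Sw_mult:
  assumes km: "kmod sZ" and l1: "\<And>b. klin sH sZ (\<lambda>a. f a b)" and l2: "\<And>a. klin sH sZ (f a)"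
  shows "Sw (x * y) f = Sw x (\<lambda>a b. Sw y (\<lambda>c d. f (a * c) (b * d)))"
  using teq2_sum[OF km D_mult l1 l2] unfolding Sw_def tmul_sum .

lemma Sw_one:
  assumes km: "kmod sZ" and l1: "\<And>b. klin sH sZ (\<lambda>a. f a b)" and l2: "\<And>a. klin sH sZ (f a)"
  shows "Sw 1 f = f 1 1"
  using teq2_sum[OF km D_one l1 l2] unfolding Sw_def by simp

lemma Sw_cocomm:
  assumes cc: "cocommutative sH Delta"
    and km: "kmod sZ" and l1: "\<And>b. klin sH sZ (\<lambda>a. f a b)" and l2: "\<And>a. klin sH sZ (f a)"
  shows "Sw h f = Sw h (\<lambda>a b. f b a)"
proof -
  have "teq2 sH sH (Delta h) (flip (Delta h))" using cc by (simp add: cocommutative_def)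
  from teq2_sum[OF km this l1 l2] show ?thesis unfolding Sw_def flip_def by (simp add: comp_def case_prod_unfold)
qed

lemma Sw_counitL: "kmod sZ \<Longrightarrow> klin sH sZ g \<Longrightarrow> Sw h (\<lambda>a b. sZ (eps a) (g b)) = g h"
proof -
  assume km: "kmod sZ" and g: "klin sH sZ g"
  have "g h = g (sum_list (map (\<lambda>(a, b). sH (eps a) b) (Delta h)))" by (simp add: counitL)
  also have "\<dots> = Sw h (\<lambda>a b. sZ (eps a) (g b))"
    unfolding Sw_def klin_sum_list[OF g] by (simp add: case_prod_unfold klin_scal[OF g])
  finally show ?thesis by simp
qed

lemma Sw_counitR: "kmod sZ \<Longrightarrow> klin sH sZ g \<Longrightarrow> Sw h (\<lambda>a b. sZ (eps b) (g a)) = g h"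
proof -
  assume km: "kmod sZ" and g: "klin sH sZ g"
  have "g h = g (sum_list (map (\<lambda>(a, b). sH (eps b) a) (Delta h)))" by (simp add: counitR)
  also have "\<dots> = Sw h (\<lambda>a b. sZ (eps b) (g a))"
    unfolding Sw_def klin_sum_list[OF g] by (simp add: case_prod_unfold klin_scal[OF g])
  finally show ?thesis by simp
qed

lemma Sw_mult_right: "Sw h f * c = Sw h (\<lambda>a b. f a b * c)"
  for c :: "'r::ring_1" unfolding Sw_def by (simp add: sum_list_mult_right case_prod_unfold)
lemma Sw_mult_left: "c * Sw h f = Sw h (\<lambda>a b. c * f a b)"
  for c :: "'r::ring_1" unfolding Sw_def by (simp add: sum_list_mult_left case_prod_unfold)

lemma Sw_cong: "(\<And>a b. (a, b) \<in> set (Delta h) \<Longrightarrow> f a b = g a b) \<Longrightarrow> Sw h f = Sw h g"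
  unfolding Sw_def by (rule arg_cong[where f=sum_list], rule map_cong) auto

end


lemma sum_list_swap: "sum_list (map (\<lambda>x. sum_list (map (\<lambda>y. f x y) ys)) xs)
   = sum_list (map (\<lambda>y. sum_list (map (\<lambda>x. f x y) xs)) ys)"
  for f :: "_ \<Rightarrow> _ \<Rightarrow> 'z::ab_group_add"
  by (induction xs) (auto simp: sum_list_addf)

context hctx begin

lemma Sw_swap: "Sw h (\<lambda>a b. Sw k (\<lambda>c d. f a b c d)) = Sw k (\<lambda>c d. Sw h (\<lambda>a b. f a b c d))"
  unfolding Sw_def case_prod_unfold by (rule sum_list_swap)

lemma Sw_klin: "klin s1 s2 F \<Longrightarrow> F (Sw h f) = Sw h (\<lambda>a b. F (f a b))"
  unfolding Sw_def by (simp add: klin_sum_list case_prod_unfold)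

lemma Sw_kmod: "kmod s \<Longrightarrow> s c (Sw h f) = Sw h (\<lambda>a b. s c (f a b))"
  unfolding Sw_def by (simp add: kmod_sum_list case_prod_unfold)

lemma klin_conv: "kalg s \<Longrightarrow> klin sH s f \<Longrightarrow> klin sH s g \<Longrightarrow> klin sH s (conv Delta f g)"
proof -
  assume ks: "kalg s" and f: "klin sH s f" and g: "klin sH s g"
  have "klin sH s (\<lambda>x. Sw x (\<lambda>a b. f a * g b))"
    by (rule klin_Sw[OF kalg_kmod[OF ks]]) (intro klin_mult_right[OF ks] klin_mult_left[OF ks] f g)+
  then show ?thesis by (simp add: conv_Sw[abs_def])
qed

lemma conv_assoc:
  assumes ks: "kalg s" and f: "klin sH s f" and g: "klin sH s g" and k: "klin sH s k"
  shows "conv Delta (conv Delta f g) k = conv Delta f (conv Delta g k)"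
proof (rule ext)
  fix h
  have "conv Delta (conv Delta f g) k h = Sw h (\<lambda>a b. Sw a (\<lambda>a1 a2. f a1 * g a2 * k b))"
    by (simp add: conv_Sw Sw_mult_right)
  also have "\<dots> = Sw h (\<lambda>a b. Sw b (\<lambda>b1 b2. f a * g b1 * k b2))"
    by (rule Sw_coassoc[OF kalg_kmod[OF ks]]) (intro klin_mult_right[OF ks] klin_mult_left[OF ks] f g k)+
  also have "\<dots> = conv Delta f (conv Delta g k) h"
    by (simp add: conv_Sw Sw_mult_left mult.assoc)
  finally show "conv Delta (conv Delta f g) k h = conv Delta f (conv Delta g k) h" .
qed

lemma conv_unitR: "kalg s \<Longrightarrow> klin sH s f \<Longrightarrow> conv Delta f (\<lambda>h. s (eps h) 1) = f"
proof (rule ext)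
  fix h assume ks: "kalg s" and f: "klin sH s f"
  have "conv Delta f (\<lambda>h. s (eps h) 1) h = Sw h (\<lambda>a b. s (eps b) (f a))"
    by (simp add: conv_Sw kalg_right[OF ks])
  also have "\<dots> = f h" by (rule Sw_counitR[OF kalg_kmod[OF ks] f])
  finally show "conv Delta f (\<lambda>h. s (eps h) 1) h = f h" .
qed

lemma conv_unitL: "kalg s \<Longrightarrow> klin sH s f \<Longrightarrow> conv Delta (\<lambda>h. s (eps h) 1) f = f"
proof (rule ext)
  fix h assume ks: "kalg s" and f: "klin sH s f"
  have "conv Delta (\<lambda>h. s (eps h) 1) f h = Sw h (\<lambda>a b. s (eps a) (f b))"
    by (simp add: conv_Sw kalg_left[OF ks])
  also have "\<dots> = f h" by (rule Sw_counitL[OF kalg_kmod[OF ks] f])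
  finally show "conv Delta (\<lambda>h. s (eps h) 1) f h = f h" .
qed

lemma klin_cunit: "kalg s \<Longrightarrow> klin sH s (\<lambda>h. s (eps h) 1)"
proof -
  assume ks: "kalg s"
  have km: "kmod s" using ks by (rule kalg_kmod)
  show ?thesis unfolding klin_def by (simp add: eps_add eps_scal kmod_addc[OF km] kmod_comp[OF km])
qed

lemma S_one: "S 1 = 1"
proof -
  have "Sw 1 (\<lambda>a b. S a * b) = S 1 * 1"
    by (rule Sw_one[OF kmodH]) (intro klin_mult_right[OF kalgH] klin_mult_left[OF kalgH] S_lin klin_id)+
  moreover have "Sw 1 (\<lambda>a b. S a * b) = 1" using antiL[of 1] by (simp add: Sw_def eps_one kmod_one[OF kmodH])
  ultimately show ?thesis by simp
qed

lemma Om_colinear: "t \<in> OmegaA sH sA Delta rho \<Longrightarrow> colinear sH sA Delta rho t" by (simp add: OmegaA_def)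
lemma Om_lin: "t \<in> OmegaA sH sA Delta rho \<Longrightarrow> klin sH sA t" by (simp add: OmegaA_def colinear_def)
lemma Om_mult: "t \<in> OmegaA sH sA Delta rho \<Longrightarrow> t (x * y) = t x * t y" by (simp add: OmegaA_def)
lemma Om_one: "t \<in> OmegaA sH sA Delta rho \<Longrightarrow> t 1 = 1" by (simp add: OmegaA_def)
lemma Om_linS: "t \<in> OmegaA sH sA Delta rho \<Longrightarrow> klin sH sA (\<lambda>x. t (S x))"
  by (rule klin_comp[OF Om_lin S_lin])

lemma Om_convS: assumes t: "t \<in> OmegaA sH sA Delta rho"
  shows "conv Delta t (\<lambda>x. t (S x)) = cunit sA eps" and "conv Delta (\<lambda>x. t (S x)) t = cunit sA eps"
proof -
  show "conv Delta t (\<lambda>x. t (S x)) = cunit sA eps"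
  proof (rule ext)
    fix h
    have "conv Delta t (\<lambda>x. t (S x)) h = Sw h (\<lambda>a b. t (a * S b))" by (simp add: conv_Sw Om_mult[OF t])
    also have "\<dots> = t (Sw h (\<lambda>a b. a * S b))" by (simp add: Sw_klin[OF Om_lin[OF t]])
    also have "\<dots> = cunit sA eps h"
    proof -
      have e: "Sw h (\<lambda>a b. a * S b) = sH (eps h) 1" using antiR[of h] by (simp add: Sw_def)
      show ?thesis unfolding e cunit_def klin_scal[OF Om_lin[OF t]] Om_one[OF t] ..
    qed
    finally show "conv Delta t (\<lambda>x. t (S x)) h = cunit sA eps h" .
  qed
  show "conv Delta (\<lambda>x. t (S x)) t = cunit sA eps"
  proof (rule ext)
    fix h
    have "conv Delta (\<lambda>x. t (S x)) t h = Sw h (\<lambda>a b. t (S a * b))" by (simp add: conv_Sw Om_mult[OF t])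
    also have "\<dots> = t (Sw h (\<lambda>a b. S a * b))" by (simp add: Sw_klin[OF Om_lin[OF t]])
    also have "\<dots> = cunit sA eps h"
    proof -
      have e: "Sw h (\<lambda>a b. S a * b) = sH (eps h) 1" using antiL[of h] by (simp add: Sw_def)
      show ?thesis unfolding e cunit_def klin_scal[OF Om_lin[OF t]] Om_one[OF t] ..
    qed
    finally show "conv Delta (\<lambda>x. t (S x)) t h = cunit sA eps h" .
  qed
qed

end


context hctx begin

lemmas klinH_intros = klin_mult_right[OF kalgH] klin_mult_left[OF kalgH] S_lin klin_id
  klin_Sw_par[OF kmodH] klin_comp[OF S_lin]

lemma S_antimult: "S (x * y) = S y * S x"
proof -
  have C1: "\<And>a c. Sw a (\<lambda>a1 a2. Sw c (\<lambda>c1 c2. S (a1 * c1) * (a2 * c2))) = sH (eps a * eps c) 1"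
  proof -
    fix a c
    have "Sw (a * c) (\<lambda>p q. S p * q) = Sw a (\<lambda>a1 a2. Sw c (\<lambda>c1 c2. S (a1 * c1) * (a2 * c2)))"
      by (rule Sw_mult[OF kmodH]) (intro klinH_intros)+
    moreover have "Sw (a * c) (\<lambda>p q. S p * q) = sH (eps (a * c)) 1" using antiL by (simp add: Sw_def)
    ultimately show "Sw a (\<lambda>a1 a2. Sw c (\<lambda>c1 c2. S (a1 * c1) * (a2 * c2))) = sH (eps a * eps c) 1"
      by (simp add: eps_mult)
  qed
  have C2: "\<And>b d. Sw b (\<lambda>b1 b2. Sw d (\<lambda>d1 d2. b1 * d1 * S d2 * S b2)) = sH (eps b * eps d) 1"
  proof -
    fix b d
    have ad: "Sw d (\<lambda>d1 d2. d1 * S d2) = sH (eps d) 1" using antiR by (simp add: Sw_def)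
    have ab: "Sw b (\<lambda>b1 b2. b1 * S b2) = sH (eps b) 1" using antiR by (simp add: Sw_def)
    have i: "\<And>b1 b2. Sw d (\<lambda>d1 d2. b1 * d1 * S d2 * S b2) = sH (eps d) (b1 * S b2)"
    proof -
      fix b1 b2
      have "Sw d (\<lambda>d1 d2. b1 * d1 * S d2 * S b2) = b1 * Sw d (\<lambda>d1 d2. d1 * S d2) * S b2"
        by (simp add: Sw_mult_left Sw_mult_right mult.assoc)
      then show "Sw d (\<lambda>d1 d2. b1 * d1 * S d2 * S b2) = sH (eps d) (b1 * S b2)"
        unfolding ad by (simp add: kalg_left[OF kalgH] kalg_right[OF kalgH])
    qed
    have "Sw b (\<lambda>b1 b2. Sw d (\<lambda>d1 d2. b1 * d1 * S d2 * S b2)) = Sw b (\<lambda>b1 b2. sH (eps d) (b1 * S b2))"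
      by (simp add: i)
    also have "\<dots> = sH (eps d) (Sw b (\<lambda>b1 b2. b1 * S b2))" by (simp add: Sw_kmod[OF kmodH])
    finally show "Sw b (\<lambda>b1 b2. Sw d (\<lambda>d1 d2. b1 * d1 * S d2 * S b2)) = sH (eps b * eps d) 1"
      unfolding ab by (simp add: kmod_comp[OF kmodH] mult.commute)
  qed
  have "S (x * y) = Sw x (\<lambda>a b. sH (eps b) (Sw y (\<lambda>c d. sH (eps d) (S (a * c)))))"
  proof -
    have inn: "\<And>a. Sw y (\<lambda>c d. sH (eps d) (S (a * c))) = S (a * y)"
      by (rule Sw_counitR[OF kmodH, where g="\<lambda>c. S (_ * c)"]) (intro klinH_intros)+
    have "Sw x (\<lambda>a b. sH (eps b) (S (a * y))) = S (x * y)"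
      by (rule Sw_counitR[OF kmodH, where g="\<lambda>a. S (a * y)"]) (intro klinH_intros)+
    then show ?thesis by (simp add: inn)
  qed
  also have "\<dots> = Sw x (\<lambda>a b. Sw y (\<lambda>c d. S (a * c) * Sw b (\<lambda>b1 b2. Sw d (\<lambda>d1 d2. b1 * d1 * S d2 * S b2))))"
    by (simp add: C2 Sw_kmod[OF kmodH] kalg_right[OF kalgH] kmod_comp[OF kmodH])
  also have "\<dots> = Sw x (\<lambda>a b. Sw y (\<lambda>c d. Sw b (\<lambda>b1 b2. Sw d (\<lambda>d1 d2. S (a * c) * b1 * d1 * S d2 * S b2))))"
    by (simp add: Sw_mult_left mult.assoc)
  also have "\<dots> = Sw x (\<lambda>a b. Sw b (\<lambda>b1 b2. Sw y (\<lambda>c d. Sw d (\<lambda>d1 d2. S (a * c) * b1 * d1 * S d2 * S b2))))"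
    by (rule arg_cong[where f="Sw x"], rule ext, rule ext, rule Sw_swap)
  also have "\<dots> = Sw x (\<lambda>a b. Sw a (\<lambda>a1 a2. Sw y (\<lambda>c d. Sw d (\<lambda>d1 d2. S (a1 * c) * a2 * d1 * S d2 * S b))))"
    by (rule Sw_coassoc[OF kmodH, symmetric]) (intro klinH_intros)+
  also have "\<dots> = Sw x (\<lambda>a b. Sw a (\<lambda>a1 a2. Sw y (\<lambda>c d. Sw c (\<lambda>c1 c2. S (a1 * c1) * a2 * c2 * S d * S b))))"
    apply (rule arg_cong[where f="Sw x"], rule ext, rule ext)
    apply (rule arg_cong[where f="Sw _"], rule ext, rule ext)
    by (rule Sw_coassoc[OF kmodH, symmetric]) (intro klinH_intros)+
  also have "\<dots> = Sw x (\<lambda>a b. Sw y (\<lambda>c d. Sw a (\<lambda>a1 a2. Sw c (\<lambda>c1 c2. S (a1 * c1) * (a2 * c2))) * S d * S b))"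
    apply (rule arg_cong[where f="Sw x"], rule ext, rule ext)
    apply (subst Sw_swap)
    by (simp add: Sw_mult_right mult.assoc)
  also have "\<dots> = Sw x (\<lambda>a b. Sw y (\<lambda>c d. sH (eps a) (sH (eps c) (S d * S b))))"
    by (simp add: C1 kalg_left[OF kalgH] kmod_comp[OF kmodH])
  also have "\<dots> = Sw x (\<lambda>a b. sH (eps a) (S y * S b))"
  proof -
    have "\<And>b. Sw y (\<lambda>c d. sH (eps c) (S d * S b)) = S y * S b"
      by (rule Sw_counitL[OF kmodH, where g="\<lambda>d. S d * S _"]) (intro klinH_intros)+
    then show ?thesis by (simp add: Sw_kmod[OF kmodH, symmetric])
  qed
  also have "\<dots> = S y * S x"
    by (rule Sw_counitL[OF kmodH, where g="\<lambda>b. S y * S b"]) (intro klinH_intros)+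
  finally show ?thesis .
qed

end


lemma teq2_scRL: "teq2 s1 s2 [(x, s2 c y)] [(s1 c x, y)]"
  by (rule teq2_sym[OF teq2_scLR])

lemma teq2_map_elem: "(\<And>l. l \<in> set L \<Longrightarrow> teq2 s1 s2 [f l] [g l]) \<Longrightarrow> teq2 s1 s2 (map f L) (map g L)"
proof -
  assume a: "\<And>l. l \<in> set L \<Longrightarrow> teq2 s1 s2 [f l] [g l]"
  have "teq2 s1 s2 (concat (map (\<lambda>l. [f l]) L)) (concat (map (\<lambda>l. [g l]) L))"
    by (rule teq2_concat) (rule a)
  moreover have "\<And>h. concat (map (\<lambda>l. [h l]) L) = map h L" by (induction L) auto
  ultimately show ?thesis by simp
qed

lemma teq2_map_split: "(\<And>l. l \<in> set L \<Longrightarrow> teq2 s1 s2 [f l] [g l, k l]) \<Longrightarrow>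
    teq2 s1 s2 (map f L) (map g L @ map k L)"
proof -
  assume a: "\<And>l. l \<in> set L \<Longrightarrow> teq2 s1 s2 [f l] [g l, k l]"
  have "teq2 s1 s2 (concat (map (\<lambda>l. [f l]) L)) (concat (map (\<lambda>l. [g l, k l]) L))"
    by (rule teq2_concat) (rule a)
  moreover have "concat (map (\<lambda>l. [f l]) L) = map f L" by (induction L) auto
  moreover have "teq2 s1 s2 (concat (map (\<lambda>l. [g l, k l]) L)) (map g L @ map k L)"
    by (rule teq2_mset) (induction L, auto)
  ultimately show ?thesis using teq2_trans by metis
qed

lemma teq2_map_push:
  fixes \<psi> :: "'x::ab_group_add \<Rightarrow> 'y::ab_group_add \<Rightarrow> ('u::ab_group_add \<times> 'v::ab_group_add)"
    and s1 :: "'k::comm_ring_1 \<Rightarrow> 'x \<Rightarrow> 'x"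
  assumes h: "teq2 s1 s2 L M"
    and a1: "\<And>x x' y. teq2 t1 t2 [\<psi> (x + x') y] [\<psi> x y, \<psi> x' y]"
    and a2: "\<And>x y y'. teq2 t1 t2 [\<psi> x (y + y')] [\<psi> x y, \<psi> x y']"
    and a3: "\<And>c x y. teq2 t1 t2 [\<psi> (s1 c x) y] (scl t1 c [\<psi> x y])"
    and a4: "\<And>c x y. teq2 t1 t2 [\<psi> x (s2 c y)] (scl t1 c [\<psi> x y])"
  shows "teq2 t1 t2 (map (\<lambda>(a, b). \<psi> a b) L) (map (\<lambda>(a, b). \<psi> a b) M)"
proof -
  have "teq2 t1 t2 (concat (map (\<lambda>(a, b). [\<psi> a b]) L)) (concat (map (\<lambda>(a, b). [\<psi> a b]) M))"
    apply (rule teq2_push[OF h]) using a1 a2 a3 a4 by simp_all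
  moreover have "\<And>N. concat (map (\<lambda>(a, b). [\<psi> a b]) N) = map (\<lambda>(a, b). \<psi> a b) N"
    by (induct_tac N) auto
  ultimately show ?thesis by simp
qed

context hctx begin

abbreviation teqA where "teqA \<equiv> teq2 sA sH"

lemma teqA_trans: "teqA a b \<Longrightarrow> teqA b c \<Longrightarrow> teqA a c" by (rule teq2_trans)

lemma rho_zero: "teqA (rho 0) []"
proof -
  have "teqA (rho (0 + 0)) (rho 0 @ rho 0)" by (rule rho_add)
  then have "teqA (rho 0 @ rho 0) (rho 0 @ [])" using teq2_sym by simp
  then show ?thesis by (rule teq2_cancel)
qed

lemma rho_sum: "teqA (rho (sum_list (map f L))) (concat (map (\<lambda>l. rho (f l)) L))"
proof (induction L)
  case Nil then show ?case using rho_zero by simp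
next
  case (Cons a L)
  have "teqA (rho (f a + sum_list (map f L))) (rho (f a) @ rho (sum_list (map f L)))" by (rule rho_add)
  moreover have "teqA (rho (f a) @ rho (sum_list (map f L))) (rho (f a) @ concat (map (\<lambda>l. rho (f l)) L))"
    by (rule teq2_append[OF teq2_refl Cons.IH])
  ultimately show ?case using teq2_trans by fastforce
qed

definition llin :: "('h \<Rightarrow> ('a \<times> 'h) list) \<Rightarrow> bool" where
  "llin F \<longleftrightarrow> (\<forall>x y. teqA (F (x + y)) (F x @ F y)) \<and> (\<forall>c x. teqA (F (sH c x)) (scl sA c (F x)))"

lemma llin_add: "llin F \<Longrightarrow> teqA (F (x + y)) (F x @ F y)" by (simp add: llin_def)
lemma llin_scal: "llin F \<Longrightarrow> teqA (F (sH c x)) (scl sA c (F x))" by (simp add: llin_def)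

lemma llin_zero: "llin F \<Longrightarrow> teqA (F 0) []"
proof -
  assume l: "llin F"
  have "teqA (F (0 + 0)) (F 0 @ F 0)" by (rule llin_add[OF l])
  then have "teqA (F 0 @ F 0) (F 0 @ [])" using teq2_sym by simp
  then show ?thesis by (rule teq2_cancel)
qed

lemma llin_sum: "llin F \<Longrightarrow> teqA (F (sum_list (map g L))) (concat (map (\<lambda>l. F (g l)) L))"
proof (induction L)
  case Nil then show ?case using llin_zero by simp
next
  case (Cons a L)
  have "teqA (F (g a + sum_list (map g L))) (F (g a) @ F (sum_list (map g L)))" by (rule llin_add[OF Cons.prems])
  moreover have "teqA (F (g a) @ F (sum_list (map g L))) (F (g a) @ concat (map (\<lambda>l. F (g l)) L))"
    by (rule teq2_append[OF teq2_refl Cons.IH[OF Cons.prems]])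
  ultimately show ?case using teq2_trans by fastforce
qed

definition conv2 :: "('h \<Rightarrow> ('a \<times> 'h) list) \<Rightarrow> ('h \<Rightarrow> ('a \<times> 'h) list) \<Rightarrow> 'h \<Rightarrow> ('a \<times> 'h) list" where
  "conv2 F G h = concat (map (\<lambda>(a, b). tmul (F a) (G b)) (Delta h))"

lemma conv2_cong: "(\<And>x. teqA (F x) (F' x)) \<Longrightarrow> (\<And>x. teqA (G x) (G' x)) \<Longrightarrow> teqA (conv2 F G h) (conv2 F' G' h)"
  unfolding conv2_def by (rule teq2_concat) (auto intro: tmul_cong[OF kalgA kalgH])

lemma conv2_assoc:
  assumes F: "llin F" and G: "llin G" and K: "llin K"
  shows "teqA (conv2 (conv2 F G) K h) (conv2 F (conv2 G K) h)"
proof -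
  let ?\<Phi> = "\<lambda>x y z. tmul (tmul (F x) (G y)) (K z)"
  have e1: "conv2 (conv2 F G) K h = concat (map (\<lambda>(x, y, z). ?\<Phi> x y z) (dl Delta (Delta h)))"
    unfolding dl_concat conv2_def by (simp add: tmul_concat_left comp_def case_prod_unfold)
  have e2: "teqA (conv2 F (conv2 G K) h) (concat (map (\<lambda>(x, y, z). ?\<Phi> x y z) (dr Delta (Delta h))))"
    unfolding dr_concat conv2_def
  proof (rule teq2_concat)
    fix p assume "p \<in> set (Delta h)"
    obtain a b where p: "p = (a, b)" by force
    have "teqA (tmul (F a) (concat (map (\<lambda>(b1, b2). tmul (G b1) (K b2)) (Delta b))))
               (concat (map (\<lambda>ys. tmul (F a) ys) (map (\<lambda>(b1, b2). tmul (G b1) (K b2)) (Delta b))))"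
      by (rule tmul_concat_right)
    then show "teqA ((\<lambda>(a, b). tmul (F a) (concat (map (\<lambda>(a, b). tmul (G a) (K b)) (Delta b)))) p)
         ((\<lambda>(a, b). concat (map (\<lambda>(b1, b2). tmul (tmul (F a) (G b1)) (K b2)) (Delta b))) p)"
      by (simp add: p tmul_assoc comp_def case_prod_unfold)
  qed
  have m: "teqA (concat (map (\<lambda>(x, y, z). ?\<Phi> x y z) (dl Delta (Delta h)))) (concat (map (\<lambda>(x, y, z). ?\<Phi> x y z) (dr Delta (Delta h))))"
  proof (rule teq3_push[OF D_coassoc])
    fix x x' y z
    have "teqA (?\<Phi> (x + x') y z) (tmul (tmul (F x @ F x') (G y)) (K z))"
      by (intro tmul_cong[OF kalgA kalgH] llin_add[OF F] teq2_refl)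
    then show "teqA (?\<Phi> (x + x') y z) (?\<Phi> x y z @ ?\<Phi> x' y z)" by (simp add: tmul_append_left)
  next
    fix x y y' z
    have "teqA (?\<Phi> x (y + y') z) (tmul (tmul (F x) (G y @ G y')) (K z))"
      by (intro tmul_cong[OF kalgA kalgH] llin_add[OF G] teq2_refl)
    moreover have "teqA (tmul (tmul (F x) (G y @ G y')) (K z)) (tmul (tmul (F x) (G y) @ tmul (F x) (G y')) (K z))"
      by (intro tmul_cong[OF kalgA kalgH] tmul_append_right teq2_refl)
    ultimately show "teqA (?\<Phi> x (y + y') z) (?\<Phi> x y z @ ?\<Phi> x y' z)"
      by (simp add: tmul_append_left teq2_trans)
  next
    fix x y z z'
    have "teqA (?\<Phi> x y (z + z')) (tmul (tmul (F x) (G y)) (K z @ K z'))"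
      by (intro tmul_cong[OF kalgA kalgH] llin_add[OF K] teq2_refl)
    then show "teqA (?\<Phi> x y (z + z')) (?\<Phi> x y z @ ?\<Phi> x y z')"
      using tmul_append_right teq2_trans by blast
  next
    fix c x y z
    have "teqA (?\<Phi> (sH c x) y z) (tmul (tmul (scl sA c (F x)) (G y)) (K z))"
      by (intro tmul_cong[OF kalgA kalgH] llin_scal[OF F] teq2_refl)
    then show "teqA (?\<Phi> (sH c x) y z) (scl sA c (?\<Phi> x y z))" by (simp add: tmul_scl_left[OF kalgA])
  next
    fix c x y z
    have "teqA (?\<Phi> x (sH c y) z) (tmul (tmul (F x) (scl sA c (G y))) (K z))"
      by (intro tmul_cong[OF kalgA kalgH] llin_scal[OF G] teq2_refl)
    then show "teqA (?\<Phi> x (sH c y) z) (scl sA c (?\<Phi> x y z))"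
      by (simp add: tmul_scl_left[OF kalgA] tmul_scl_right[OF kalgA])
  next
    fix c x y z
    have "teqA (?\<Phi> x y (sH c z)) (tmul (tmul (F x) (G y)) (scl sA c (K z)))"
      by (intro tmul_cong[OF kalgA kalgH] llin_scal[OF K] teq2_refl)
    then show "teqA (?\<Phi> x y (sH c z)) (scl sA c (?\<Phi> x y z))" by (simp add: tmul_scl_right[OF kalgA])
  qed
  show ?thesis unfolding e1 using m teq2_sym[OF e2] teq2_trans by blast
qed

end


context hctx begin

definition E1 :: "'h \<Rightarrow> ('a \<times> 'h) list" where "E1 h = [(sA (eps h) 1, 1)]"

declare teq2_trans[trans]

lemma scl_tmul_unitR: "tmul L [(sA c 1, 1)] = scl sA c L" for L :: "('a \<times> 'h) list"
  by (induction L) (auto simp: tmul_Cons kalg_right[OF kalgA])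

lemma scl_tmul_unitL: "tmul [(sA c 1, 1)] L = scl sA c L" for L :: "('a \<times> 'h) list"
  by (induction L) (auto simp: tmul_single_left kalg_left[OF kalgA])

lemma conv2_unitR: assumes F: "llin F" shows "teqA (conv2 F E1 h) (F h)"
proof -
  have "conv2 F E1 h = concat (map (\<lambda>(a, b). scl sA (eps b) (F a)) (Delta h))"
    unfolding conv2_def E1_def by (simp add: scl_tmul_unitR)
  also have "teqA \<dots> (concat (map (\<lambda>(a, b). F (sH (eps b) a)) (Delta h)))"
    by (rule teq2_concat) (auto intro: teq2_sym[OF llin_scal[OF F]])
  also have "teqA \<dots> (F (sum_list (map (\<lambda>(a, b). sH (eps b) a) (Delta h))))"
    using teq2_sym[OF llin_sum[OF F, of "\<lambda>(a, b). sH (eps b) a" "Delta h"]] by (simp add: case_prod_unfold)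
  finally show ?thesis using counitR by simp
qed

lemma conv2_unitL: assumes F: "llin F" shows "teqA (conv2 E1 F h) (F h)"
proof -
  have "conv2 E1 F h = concat (map (\<lambda>(a, b). scl sA (eps a) (F b)) (Delta h))"
    unfolding conv2_def E1_def by (simp add: scl_tmul_unitL)
  also have "teqA \<dots> (concat (map (\<lambda>(a, b). F (sH (eps a) b)) (Delta h)))"
    by (rule teq2_concat) (auto intro: teq2_sym[OF llin_scal[OF F]])
  also have "teqA \<dots> (F (sum_list (map (\<lambda>(a, b). sH (eps a) b) (Delta h))))"
    using teq2_sym[OF llin_sum[OF F, of "\<lambda>(a, b). sH (eps a) b" "Delta h"]] by (simp add: case_prod_unfold)
  finally show ?thesis using counitL by simp
qed

lemma llin_rho: "klin sH sA u \<Longrightarrow> llin (\<lambda>x. rho (u x))"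
  unfolding llin_def by (simp add: klin_add klin_scal rho_add rho_scal)

lemma llin_E1: "llin E1"
  unfolding llin_def E1_def
  by (simp add: eps_add eps_scal kmod_addc[OF kmodA] kmod_comp[OF kmodA] teq2_addL teq2_refl)

lemma llin_Q': assumes u: "klin sH sA u" shows "llin (\<lambda>x. map (\<lambda>(a, b). (u b, S a)) (Delta x))"
  unfolding llin_def
proof (intro conjI allI)
  fix x y
  have "teqA (map (\<lambda>(a, b). (u b, S a)) (Delta (x + y))) (map (\<lambda>(a, b). (u b, S a)) (Delta x @ Delta y))"
  proof (rule teq2_map_push[OF D_add])
    fix a a' b show "teqA [(u b, S (a + a'))] [(u b, S a), (u b, S a')]" by (simp add: klin_add[OF S_lin] teq2_addR)
  next
    fix a b b' show "teqA [(u (b + b'), S a)] [(u b, S a), (u b', S a)]" by (simp add: klin_add[OF u] teq2_addL)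
  next
    fix c a b show "teqA [(u b, S (sH c a))] (scl sA c [(u b, S a)])" by (simp add: klin_scal[OF S_lin] teq2_scRL)
  next
    fix c a b show "teqA [(u (sH c b), S a)] (scl sA c [(u b, S a)])" by (simp add: klin_scal[OF u] teq2_refl)
  qed
  then show "teqA (map (\<lambda>(a, b). (u b, S a)) (Delta (x + y))) (map (\<lambda>(a, b). (u b, S a)) (Delta x) @ map (\<lambda>(a, b). (u b, S a)) (Delta y))"
    by simp
next
  fix c x
  have "teqA (map (\<lambda>(a, b). (u b, S a)) (Delta (sH c x))) (map (\<lambda>(a, b). (u b, S a)) (scl sH c (Delta x)))"
  proof (rule teq2_map_push[OF D_scal])
    fix a a' b show "teqA [(u b, S (a + a'))] [(u b, S a), (u b, S a')]" by (simp add: klin_add[OF S_lin] teq2_addR)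
  next
    fix a b b' show "teqA [(u (b + b'), S a)] [(u b, S a), (u b', S a)]" by (simp add: klin_add[OF u] teq2_addL)
  next
    fix c a b show "teqA [(u b, S (sH c a))] (scl sA c [(u b, S a)])" by (simp add: klin_scal[OF S_lin] teq2_scRL)
  next
    fix c a b show "teqA [(u (sH c b), S a)] (scl sA c [(u b, S a)])" by (simp add: klin_scal[OF u] teq2_refl)
  qed
  also have "teqA (map (\<lambda>(a, b). (u b, S a)) (scl sH c (Delta x))) (scl sA c (map (\<lambda>(a, b). (u b, S a)) (Delta x)))"
    by (simp add: comp_def case_prod_unfold) (rule teq2_map_elem, simp add: klin_scal[OF S_lin] teq2_scRL)
  finally show "teqA (map (\<lambda>(a, b). (u b, S a)) (Delta (sH c x))) (scl sA c (map (\<lambda>(a, b). (u b, S a)) (Delta x)))" .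
qed

end


lemma concat_map_singleton: "concat (map (\<lambda>x. [f x]) L) = map f L"
  by (induction L) auto

context hctx begin

lemma psi_conds:
  assumes p: "klin sH sA p" and q: "klin sH sA q"
  shows "teqA [(p x * q b2, y * S (b1 + b1'))] [(p x * q b2, y * S b1), (p x * q b2, y * S b1')]"
    and "teqA [(p x * q (b2 + b2'), y * S b1)] [(p x * q b2, y * S b1), (p x * q b2', y * S b1)]"
    and "teqA [(p x * q b2, y * S (sH c b1))] (scl sA c [(p x * q b2, y * S b1)])"
    and "teqA [(p x * q (sH c b2), y * S b1)] (scl sA c [(p x * q b2, y * S b1)])"
  by (simp_all add: klin_add[OF S_lin] klin_add[OF q] klin_scal[OF S_lin] klin_scal[OF q]
      distrib_left kalg_right[OF kalgH] kalg_right[OF kalgA] teq2_addL teq2_addR teq2_scRL teq2_refl)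

lemma D_inner:
  assumes p: "klin sH sA p" and q: "klin sH sA q"
  shows "teqA (concat (map (\<lambda>(b1, b2). map (\<lambda>(c, d). (p a * q d, b1 * S c)) (Delta b2)) (Delta b))) [(p a * q b, 1)]"
proof -
  let ?\<Gamma> = "\<lambda>x y z. [(p a * q z, x * S y)]"
  have e1: "concat (map (\<lambda>(b1, b2). map (\<lambda>(c, d). (p a * q d, b1 * S c)) (Delta b2)) (Delta b))
      = concat (map (\<lambda>(x, y, z). ?\<Gamma> x y z) (dr Delta (Delta b)))"
    unfolding dr_concat by (simp add: case_prod_unfold concat_map_singleton)
  have m: "teqA (concat (map (\<lambda>(x, y, z). ?\<Gamma> x y z) (dr Delta (Delta b)))) (concat (map (\<lambda>(x, y, z). ?\<Gamma> x y z) (dl Delta (Delta b))))"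
    apply (rule teq2_sym, rule teq3_push[OF D_coassoc])
    by (simp_all add: klin_add[OF S_lin] klin_add[OF q] klin_scal[OF S_lin] klin_scal[OF q]
      distrib_left distrib_right kalg_right[OF kalgH] kalg_left[OF kalgH] kalg_right[OF kalgA] teq2_addL teq2_addR teq2_scRL teq2_refl)
  have e2: "concat (map (\<lambda>(x, y, z). ?\<Gamma> x y z) (dl Delta (Delta b)))
      = concat (map (\<lambda>(x, d). map (\<lambda>(b1, c). (p a * q d, b1 * S c)) (Delta x)) (Delta b))"
    unfolding dl_concat by (simp add: case_prod_unfold concat_map_singleton)
  have s1: "teqA (concat (map (\<lambda>(x, d). map (\<lambda>(b1, c). (p a * q d, b1 * S c)) (Delta x)) (Delta b)))
      (concat (map (\<lambda>(x, d). [(p a * q d, sum_list (map (\<lambda>(b1, c). b1 * S c) (Delta x)))]) (Delta b)))"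
  proof (rule teq2_concat)
    fix l assume "l \<in> set (Delta b)"
    obtain x d where l: "l = (x, d)" by force
    show "teqA ((\<lambda>(x, d). map (\<lambda>(b1, c). (p a * q d, b1 * S c)) (Delta x)) l)
         ((\<lambda>(x, d). [(p a * q d, sum_list (map (\<lambda>(b1, c). b1 * S c) (Delta x)))]) l)"
      using teq2_sym[OF teq2_sumR[of sA sH "p a * q d" "\<lambda>(b1, c). b1 * S c" "Delta x"]]
      by (simp add: l case_prod_unfold)
  qed
  have s2: "teqA (concat (map (\<lambda>(x, d). [(p a * q d, sum_list (map (\<lambda>(b1, c). b1 * S c) (Delta x)))]) (Delta b)))
      (map (\<lambda>(x, d). (p a * q (sH (eps x) d), 1)) (Delta b))"
  proof -
    have "teqA (concat (map (\<lambda>(x, d). [(p a * q d, sum_list (map (\<lambda>(b1, c). b1 * S c) (Delta x)))]) (Delta b)))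
      (concat (map (\<lambda>(x, d). [(p a * q (sH (eps x) d), 1)]) (Delta b)))"
    proof (rule teq2_concat)
      fix l assume "l \<in> set (Delta b)"
      obtain x d where l: "l = (x, d)" by force
      have "teqA [(p a * q d, sH (eps x) 1)] [(sA (eps x) (p a * q d), 1)]" by (rule teq2_scRL)
      then show "teqA ((\<lambda>(x, d). [(p a * q d, sum_list (map (\<lambda>(b1, c). b1 * S c) (Delta x)))]) l)
         ((\<lambda>(x, d). [(p a * q (sH (eps x) d), 1)]) l)"
        by (simp add: l antiR klin_scal[OF q] kalg_right[OF kalgA])
    qed
    then show ?thesis by (simp add: case_prod_unfold concat_map_singleton)
  qed
  have s3: "teqA (map (\<lambda>(x, d). (p a * q (sH (eps x) d), 1)) (Delta b)) [(p a * q b, 1)]"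
  proof -
    have "teqA (map (\<lambda>(x, d). (p a * q (sH (eps x) d), 1)) (Delta b))
        [(sum_list (map (\<lambda>(x, d). p a * q (sH (eps x) d)) (Delta b)), 1)]"
      using teq2_sym[OF teq2_sumL[of sA sH "\<lambda>(x, d). p a * q (sH (eps x) d)" "Delta b" 1]]
      by (simp add: case_prod_unfold)
    moreover have "sum_list (map (\<lambda>(x, d). p a * q (sH (eps x) d)) (Delta b)) = p a * q b"
    proof -
      have "p a * q b = p a * q (sum_list (map (\<lambda>(x, d). sH (eps x) d) (Delta b)))" by (simp add: counitL)
      also have "\<dots> = sum_list (map (\<lambda>(x, d). p a * q (sH (eps x) d)) (Delta b))"
        by (simp add: klin_sum_list[OF q] sum_list_mult_left case_prod_unfold)
      finally show ?thesis by simp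
    qed
    ultimately show ?thesis by simp
  qed
  show ?thesis unfolding e1 using m[unfolded e2] s1 s2 s3 teq2_trans by blast
qed

end


context hctx begin

lemma D_main:
  assumes p: "klin sH sA p" and q: "klin sH sA q"
  shows "teqA (concat (map (\<lambda>(a, b). concat (map (\<lambda>(a1, a2). map (\<lambda>(b1, b2). (p a1 * q b2, a2 * S b1)) (Delta b)) (Delta a))) (Delta h)))
              [(conv Delta p q h, 1)]"
proof -
  let ?\<Phi> = "\<lambda>x y z. map (\<lambda>(b1, b2). (p x * q b2, y * S b1)) (Delta z)"
  have e1: "concat (map (\<lambda>(a, b). concat (map (\<lambda>(a1, a2). map (\<lambda>(b1, b2). (p a1 * q b2, a2 * S b1)) (Delta b)) (Delta a))) (Delta h))
      = concat (map (\<lambda>(x, y, z). ?\<Phi> x y z) (dl Delta (Delta h)))"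
    unfolding dl_concat by simp
  have m: "teqA (concat (map (\<lambda>(x, y, z). ?\<Phi> x y z) (dl Delta (Delta h)))) (concat (map (\<lambda>(x, y, z). ?\<Phi> x y z) (dr Delta (Delta h))))"
  proof (rule teq3_push[OF D_coassoc])
    fix x x' y z
    show "teqA (?\<Phi> (x + x') y z) (?\<Phi> x y z @ ?\<Phi> x' y z)"
      by (rule teq2_map_split) (auto simp: klin_add[OF p] distrib_right teq2_addL)
  next
    fix x y y' z
    show "teqA (?\<Phi> x (y + y') z) (?\<Phi> x y z @ ?\<Phi> x y' z)"
      by (rule teq2_map_split) (auto simp: distrib_right teq2_addR)
  next
    fix x y z z'
    have "teqA (?\<Phi> x y (z + z')) (map (\<lambda>(b1, b2). (p x * q b2, y * S b1)) (Delta z @ Delta z'))"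
      by (rule teq2_map_push[OF D_add]) (rule psi_conds[OF p q])+
    then show "teqA (?\<Phi> x y (z + z')) (?\<Phi> x y z @ ?\<Phi> x y z')" by simp
  next
    fix c x y z
    show "teqA (?\<Phi> (sH c x) y z) (scl sA c (?\<Phi> x y z))"
      unfolding map_map by (rule teq2_map_elem) (auto simp: klin_scal[OF p] kalg_left[OF kalgA] teq2_refl)
  next
    fix c x y z
    show "teqA (?\<Phi> x (sH c y) z) (scl sA c (?\<Phi> x y z))"
      unfolding map_map by (rule teq2_map_elem) (auto simp: kalg_left[OF kalgH] teq2_scRL)
  next
    fix c x y z
    have "teqA (?\<Phi> x y (sH c z)) (map (\<lambda>(b1, b2). (p x * q b2, y * S b1)) (scl sH c (Delta z)))"
      by (rule teq2_map_push[OF D_scal]) (rule psi_conds[OF p q])+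
    also have "teqA (map (\<lambda>(b1, b2). (p x * q b2, y * S b1)) (scl sH c (Delta z))) (scl sA c (?\<Phi> x y z))"
      unfolding map_map by (rule teq2_map_elem) (auto simp: klin_scal[OF S_lin] kalg_right[OF kalgH] teq2_scRL)
    finally show "teqA (?\<Phi> x y (sH c z)) (scl sA c (?\<Phi> x y z))" .
  qed
  have e2: "concat (map (\<lambda>(x, y, z). ?\<Phi> x y z) (dr Delta (Delta h)))
      = concat (map (\<lambda>(a, b). concat (map (\<lambda>(b1, b2). map (\<lambda>(c, d). (p a * q d, b1 * S c)) (Delta b2)) (Delta b))) (Delta h))"
    unfolding dr_concat by simp
  have s1: "teqA (concat (map (\<lambda>(a, b). concat (map (\<lambda>(b1, b2). map (\<lambda>(c, d). (p a * q d, b1 * S c)) (Delta b2)) (Delta b))) (Delta h)))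
      (concat (map (\<lambda>(a, b). [(p a * q b, 1)]) (Delta h)))"
    by (rule teq2_concat) (auto intro: D_inner[OF p q])
  have s2: "teqA (concat (map (\<lambda>(a, b). [(p a * q b, 1)]) (Delta h))) [(conv Delta p q h, 1)]"
    using teq2_sym[OF teq2_sumL[of sA sH "\<lambda>(a, b). p a * q b" "Delta h" 1]]
    by (simp add: conv_def case_prod_unfold concat_map_singleton)
  show ?thesis unfolding e1 using m[unfolded e2] s1 s2 teq2_trans by blast
qed

lemma tmul_maps: "tmul (map (\<lambda>(a1, a2). (t a1, a2)) L) (map (\<lambda>(b1, b2). (u b2, S b1)) M)
   = concat (map (\<lambda>(a1, a2). map (\<lambda>(b1, b2). (t a1 * u b2, a2 * S b1)) M) L)"
  by (induction L) (auto simp: tmul_Cons comp_def case_prod_unfold)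

lemma GI:
  assumes t: "colinear sH sA Delta rho t" and u: "klin sH sA u"
    and tu: "conv Delta t u = cunit sA eps" and ut: "conv Delta u t = cunit sA eps"
  shows "teqA (rho (u h)) (map (\<lambda>(a, b). (u b, S a)) (Delta h))"
proof -
  have tl: "klin sH sA t" using t by (simp add: colinear_def)
  have tc: "\<And>x. teqA (rho (t x)) (map (\<lambda>(a, b). (t a, b)) (Delta x))" using t by (simp add: colinear_def)
  let ?Q = "\<lambda>x. rho (u x)" and ?R = "\<lambda>x. rho (t x)" and ?Q' = "\<lambda>x. map (\<lambda>(a, b). (u b, S a)) (Delta x)"
  have lQ: "llin ?Q" by (rule llin_rho[OF u])
  have lR: "llin ?R" by (rule llin_rho[OF tl])
  have lQ': "llin ?Q'" by (rule llin_Q'[OF u])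
  have RQ': "\<And>x. teqA (conv2 ?R ?Q' x) (E1 x)"
  proof -
    fix x
    have "teqA (conv2 ?R ?Q' x) (concat (map (\<lambda>(a, b). tmul (map (\<lambda>(a1, a2). (t a1, a2)) (Delta a)) (?Q' b)) (Delta x)))"
      unfolding conv2_def by (rule teq2_concat) (auto intro: tmul_cong[OF kalgA kalgH] tc teq2_refl)
    also have "\<dots> = concat (map (\<lambda>(a, b). concat (map (\<lambda>(a1, a2). map (\<lambda>(b1, b2). (t a1 * u b2, a2 * S b1)) (Delta b)) (Delta a))) (Delta x))"
      by (simp add: tmul_maps)
    also have "teqA \<dots> [(conv Delta t u x, 1)]" by (rule D_main[OF tl u])
    also have "[(conv Delta t u x, 1)] = E1 x" by (simp add: tu cunit_def E1_def)
    finally show "teqA (conv2 ?R ?Q' x) (E1 x)" .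
  qed
  have QR: "\<And>x. teqA (conv2 ?Q ?R x) (E1 x)"
  proof -
    fix x
    have "teqA (conv2 ?Q ?R x) (concat (map (\<lambda>(a, b). rho (u a * t b)) (Delta x)))"
      unfolding conv2_def by (rule teq2_concat) (auto intro: teq2_sym[OF rho_mult])
    also have "teqA \<dots> (rho (sum_list (map (\<lambda>(a, b). u a * t b) (Delta x))))"
      using teq2_sym[OF rho_sum[of "\<lambda>(a, b). u a * t b" "Delta x"]] by (simp add: case_prod_unfold)
    also have "sum_list (map (\<lambda>(a, b). u a * t b) (Delta x)) = sA (eps x) 1"
      using fun_cong[OF ut, of x] by (simp add: conv_def cunit_def)
    also have "teqA (rho (sA (eps x) 1)) (scl sA (eps x) (rho 1))" by (rule rho_scal)
    also have "teqA (scl sA (eps x) (rho 1)) (scl sA (eps x) [(1, 1)])" by (rule teq2_scl_cong[OF kmodA rho_one])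
    also have "scl sA (eps x) [(1, 1)] = E1 x" by (simp add: E1_def)
    finally show "teqA (conv2 ?Q ?R x) (E1 x)" .
  qed
  have "teqA (?Q h) (conv2 ?Q E1 h)" by (rule teq2_sym[OF conv2_unitR[OF lQ]])
  also have "teqA \<dots> (conv2 ?Q (conv2 ?R ?Q') h)" by (rule conv2_cong) (auto intro: teq2_refl teq2_sym[OF RQ'])
  also have "teqA \<dots> (conv2 (conv2 ?Q ?R) ?Q' h)" by (rule teq2_sym[OF conv2_assoc[OF lQ lR lQ']])
  also have "teqA \<dots> (conv2 E1 ?Q' h)" by (rule conv2_cong) (auto intro: teq2_refl QR)
  also have "teqA \<dots> (?Q' h)" by (rule conv2_unitL[OF lQ'])
  finally show ?thesis .
qed

end


context hctx begin

abbreviation B where "B \<equiv> coinv sH sA rho"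

lemma coinv_iff: "b \<in> B \<longleftrightarrow> teqA (rho b) [(b, 1)]" by (simp add: coinv_def)

definition anticol :: "('h \<Rightarrow> 'a) \<Rightarrow> bool" where
  "anticol y \<longleftrightarrow> klin sH sA y \<and> (\<forall>h. teqA (rho (y h)) (map (\<lambda>(a, b). (y b, S a)) (Delta h)))"

lemma Om_anticol: assumes s: "s \<in> OmegaA sH sA Delta rho" shows "anticol (\<lambda>x. s (S x))"
  unfolding anticol_def
  using GI[OF Om_colinear[OF s] Om_linS[OF s] Om_convS[OF s]] Om_linS[OF s] by simp

lemma col_lin: "colinear sH sA Delta rho c \<Longrightarrow> klin sH sA c" by (simp add: colinear_def)
lemma col_rho: "colinear sH sA Delta rho c \<Longrightarrow> teqA (rho (c x)) (map (\<lambda>(a, b). (c a, b)) (Delta x))"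
  by (simp add: colinear_def)

lemma conv_B:
  assumes c: "colinear sH sA Delta rho c" and y: "anticol y" and \<beta>: "\<beta> \<in> B"
  shows "conv Delta (\<lambda>a. c a * \<beta>) y h \<in> B"
proof -
  have yl: "klin sH sA y" and yr: "\<And>x. teqA (rho (y x)) (map (\<lambda>(a, b). (y b, S a)) (Delta x))"
    using y by (auto simp: anticol_def)
  have pl: "klin sH sA (\<lambda>a. c a * \<beta>)" by (rule klin_mult_right[OF kalgA col_lin[OF c]])
  let ?x = "conv Delta (\<lambda>a. c a * \<beta>) y h"
  have "teqA (rho ?x) (concat (map (\<lambda>(a, b). rho (c a * \<beta> * y b)) (Delta h)))"
    using rho_sum[of "\<lambda>(a, b). c a * \<beta> * y b" "Delta h"] by (simp add: conv_def case_prod_unfold)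
  also have "teqA \<dots> (concat (map (\<lambda>(a, b). concat (map (\<lambda>(a1, a2). map (\<lambda>(b1, b2). (c a1 * \<beta> * y b2, a2 * S b1)) (Delta b)) (Delta a))) (Delta h)))"
  proof (rule teq2_concat)
    fix l assume "l \<in> set (Delta h)"
    obtain a b where l: "l = (a, b)" by force
    have "teqA (rho (c a * \<beta> * y b)) (tmul (rho (c a * \<beta>)) (rho (y b)))" by (rule rho_mult)
    also have "teqA \<dots> (tmul (tmul (rho (c a)) (rho \<beta>)) (rho (y b)))"
      by (intro tmul_cong[OF kalgA kalgH] rho_mult teq2_refl)
    also have "teqA \<dots> (tmul (tmul (map (\<lambda>(a1, a2). (c a1, a2)) (Delta a)) [(\<beta>, 1)]) (map (\<lambda>(b1, b2). (y b2, S b1)) (Delta b)))"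
      using \<beta> by (intro tmul_cong[OF kalgA kalgH] col_rho[OF c] yr) (simp_all add: coinv_iff)
    also have "tmul (map (\<lambda>(a1, a2). (c a1, a2)) (Delta a)) [(\<beta>, 1)] = map (\<lambda>(a1, a2). (c a1 * \<beta>, a2)) (Delta a)"
      by (simp add: tmul_single_right comp_def case_prod_unfold)
    also have "tmul (map (\<lambda>(a1, a2). (c a1 * \<beta>, a2)) (Delta a)) (map (\<lambda>(b1, b2). (y b2, S b1)) (Delta b))
       = concat (map (\<lambda>(a1, a2). map (\<lambda>(b1, b2). (c a1 * \<beta> * y b2, a2 * S b1)) (Delta b)) (Delta a))"
      by (rule tmul_maps)
    finally show "teqA ((\<lambda>(a, b). rho (c a * \<beta> * y b)) l)
      ((\<lambda>(a, b). concat (map (\<lambda>(a1, a2). map (\<lambda>(b1, b2). (c a1 * \<beta> * y b2, a2 * S b1)) (Delta b)) (Delta a))) l)"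
      by (simp add: l)
  qed
  also have "teqA \<dots> [(?x, 1)]" by (rule D_main[OF pl yl])
  finally show ?thesis by (simp add: coinv_iff)
qed

lemma conv_B1:
  assumes c: "colinear sH sA Delta rho c" and y: "anticol y"
  shows "conv Delta c y h \<in> B"
proof -
  have "1 \<in> B" using rho_one by (simp add: coinv_iff)
  from conv_B[OF c y this] show ?thesis by simp
qed

lemma conv_colinear:
  assumes v: "klin sH sA v" and vB: "\<And>h. v h \<in> B" and t: "colinear sH sA Delta rho t"
  shows "colinear sH sA Delta rho (conv Delta v t)"
  unfolding colinear_def
proof (intro conjI allI)
  have tl: "klin sH sA t" by (rule col_lin[OF t])
  show "klin sH sA (conv Delta v t)" by (rule klin_conv[OF kalgA v tl])
  fix h
  let ?\<Phi> = "\<lambda>x y z. [(v x * t y, z)]"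
  have "teqA (rho (conv Delta v t h)) (concat (map (\<lambda>(a, b). rho (v a * t b)) (Delta h)))"
    using rho_sum[of "\<lambda>(a, b). v a * t b" "Delta h"] by (simp add: conv_def case_prod_unfold)
  also have "teqA \<dots> (concat (map (\<lambda>(a, b). concat (map (\<lambda>(b1, b2). ?\<Phi> a b1 b2) (Delta b))) (Delta h)))"
  proof (rule teq2_concat)
    fix l assume "l \<in> set (Delta h)"
    obtain a b where l: "l = (a, b)" by force
    have "teqA (rho (v a * t b)) (tmul (rho (v a)) (rho (t b)))" by (rule rho_mult)
    also have "teqA \<dots> (tmul [(v a, 1)] (map (\<lambda>(b1, b2). (t b1, b2)) (Delta b)))"
      using vB[of a] by (intro tmul_cong[OF kalgA kalgH] col_rho[OF t]) (simp add: coinv_iff)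
    also have "tmul [(v a, 1)] (map (\<lambda>(b1, b2). (t b1, b2)) (Delta b)) = concat (map (\<lambda>(b1, b2). ?\<Phi> a b1 b2) (Delta b))"
      by (simp add: tmul_single_left comp_def case_prod_unfold concat_map_singleton)
    finally show "teqA ((\<lambda>(a, b). rho (v a * t b)) l) ((\<lambda>(a, b). concat (map (\<lambda>(b1, b2). ?\<Phi> a b1 b2) (Delta b))) l)"
      by (simp add: l)
  qed
  also have "concat (map (\<lambda>(a, b). concat (map (\<lambda>(b1, b2). ?\<Phi> a b1 b2) (Delta b))) (Delta h))
     = concat (map (\<lambda>(x, y, z). ?\<Phi> x y z) (dr Delta (Delta h)))" unfolding dr_concat ..
  also have "teqA \<dots> (concat (map (\<lambda>(x, y, z). ?\<Phi> x y z) (dl Delta (Delta h))))"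
    apply (rule teq2_sym, rule teq3_push[OF D_coassoc])
    by (simp_all add: klin_add[OF v] klin_add[OF tl] klin_scal[OF v] klin_scal[OF tl]
      distrib_left distrib_right kalg_right[OF kalgA] kalg_left[OF kalgA] teq2_addL teq2_addR teq2_scRL teq2_refl)
  also have "concat (map (\<lambda>(x, y, z). ?\<Phi> x y z) (dl Delta (Delta h)))
     = concat (map (\<lambda>(a, b). map (\<lambda>(a1, a2). (v a1 * t a2, b)) (Delta a)) (Delta h))"
    unfolding dl_concat by (simp add: case_prod_unfold concat_map_singleton)
  also have "teqA \<dots> (concat (map (\<lambda>(a, b). [(conv Delta v t a, b)]) (Delta h)))"
  proof (rule teq2_concat)
    fix l assume "l \<in> set (Delta h)"
    obtain a b where l: "l = (a, b)" by force
    show "teqA ((\<lambda>(a, b). map (\<lambda>(a1, a2). (v a1 * t a2, b)) (Delta a)) l) ((\<lambda>(a, b). [(conv Delta v t a, b)]) l)"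
      using teq2_sym[OF teq2_sumL[of sA sH "\<lambda>(a1, a2). v a1 * t a2" "Delta a" b]]
      by (simp add: l conv_def case_prod_unfold)
  qed
  also have "concat (map (\<lambda>(a, b). [(conv Delta v t a, b)]) (Delta h)) = map (\<lambda>(a, b). (conv Delta v t a, b)) (Delta h)"
    by (simp add: case_prod_unfold concat_map_singleton)
  finally show "teqA (rho (conv Delta v t h)) (map (\<lambda>(a, b). (conv Delta v t a, b)) (Delta h))" .
qed

end


locale cctx = hctx sH Delta eps S sA rho
  for sH :: "'k::comm_ring_1 \<Rightarrow> 'h::ring_1 \<Rightarrow> 'h" and Delta :: "'h \<Rightarrow> ('h \<times> 'h) list"
    and eps :: "'h \<Rightarrow> 'k" and S :: "'h \<Rightarrow> 'h"
    and sA :: "'k \<Rightarrow> 'a::ring_1 \<Rightarrow> 'a" and rho :: "'a \<Rightarrow> ('a \<times> 'h) list" +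
  fixes t u :: "'h \<Rightarrow> 'a"
  assumes cc: "cocommutative sH Delta"
    and col: "colinear sH sA Delta rho t"
    and inv: "conv_inverse sH sA Delta eps t u"
    and comm: "\<forall>x \<in> coinv sH sA rho. \<forall>y \<in> coinv sH sA rho. x * y = y * x"
begin

lemma tl: "klin sH sA t" by (rule col_lin[OF col])
lemma ul: "klin sH sA u" using inv by (simp add: conv_inverse_def)
lemma tu: "conv Delta t u = cunit sA eps" using inv by (simp add: conv_inverse_def)
lemma ut: "conv Delta u t = cunit sA eps" using inv by (simp add: conv_inverse_def)
lemma commB: "x \<in> B \<Longrightarrow> y \<in> B \<Longrightarrow> x * y = y * x" using comm by blast

lemma cunitA: "cunit sA eps = (\<lambda>h. sA (eps h) 1)" by (simp add: cunit_def[abs_def])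

lemma cuR: "klin sH sA f \<Longrightarrow> conv Delta f (cunit sA eps) = f"
  unfolding cunitA by (rule conv_unitR[OF kalgA])
lemma cuL: "klin sH sA f \<Longrightarrow> conv Delta (cunit sA eps) f = f"
  unfolding cunitA by (rule conv_unitL[OF kalgA])
lemma cassoc: "klin sH sA f \<Longrightarrow> klin sH sA g \<Longrightarrow> klin sH sA k \<Longrightarrow>
    conv Delta (conv Delta f g) k = conv Delta f (conv Delta g k)"
  by (rule conv_assoc[OF kalgA])
lemma clin: "klin sH sA f \<Longrightarrow> klin sH sA g \<Longrightarrow> klin sH sA (conv Delta f g)"
  by (rule klin_conv[OF kalgA])

lemma conv_comm_B: "(\<And>h. f h \<in> B) \<Longrightarrow> (\<And>h. g h \<in> B) \<Longrightarrow> klin sH sA f \<Longrightarrow> klin sH sA g \<Longrightarrow>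
   conv Delta f g = conv Delta g f"
proof (rule ext)
  fix h assume fB: "\<And>h. f h \<in> B" and gB: "\<And>h. g h \<in> B" and fl: "klin sH sA f" and gl: "klin sH sA g"
  have "conv Delta f g h = Sw h (\<lambda>a c. g c * f a)" by (simp add: conv_Sw commB[OF fB gB])
  also have "\<dots> = Sw h (\<lambda>a c. g a * f c)"
    by (rule Sw_cocomm[OF cc kmodA]) (intro klin_mult_right[OF kalgA] klin_mult_left[OF kalgA] fl gl)+
  also have "\<dots> = conv Delta g f h" by (simp add: conv_Sw)
  finally show "conv Delta f g h = conv Delta g f h" .
qed

lemma act_conv: "act Delta t u h b = conv Delta (\<lambda>a. t a * b) u h"
  by (simp add: act_def conv_def)

lemma IND:
  assumes s: "s \<in> OmegaA sH sA Delta rho" and b: "b \<in> B"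
  shows "act Delta t u h b = conv Delta (\<lambda>a. s a * b) (\<lambda>x. s (S x)) h"
proof -
  let ?s' = "\<lambda>x. s (S x)" and ?sb = "\<lambda>a. s a * b"
  have sl: "klin sH sA s" by (rule Om_lin[OF s])
  have s'l: "klin sH sA ?s'" by (rule Om_linS[OF s])
  have sbl: "klin sH sA ?sb" by (rule klin_mult_right[OF kalgA sl])
  have ss': "conv Delta s ?s' = cunit sA eps" and s's: "conv Delta ?s' s = cunit sA eps"
    using Om_convS[OF s] by auto
  define f where "f = conv Delta t ?s'"
  define g where "g = conv Delta s u"
  define X where "X = conv Delta ?sb ?s'"
  have fl: "klin sH sA f" unfolding f_def by (rule clin[OF tl s'l])
  have gl: "klin sH sA g" unfolding g_def by (rule clin[OF sl ul])
  have Xl: "klin sH sA X" unfolding X_def by (rule clin[OF sbl s'l])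
  have fB: "\<And>h. f h \<in> B" unfolding f_def by (rule conv_B1[OF col Om_anticol[OF s]])
  have XB: "\<And>h. X h \<in> B" unfolding X_def by (rule conv_B[OF Om_colinear[OF s] Om_anticol[OF s] b])
  have fs: "conv Delta f s = t" unfolding f_def by (simp add: cassoc[OF tl s'l sl] s's cuR[OF tl])
  have s'g: "conv Delta ?s' g = u" unfolding g_def by (simp add: cassoc[OF s'l sl ul, symmetric] s's cuL[OF ul])
  have fg: "conv Delta f g = cunit sA eps"
    unfolding f_def by (simp add: cassoc[OF tl s'l gl] s'g tu)
  have tb: "(\<lambda>a. t a * b) = conv Delta f ?sb"
  proof (rule ext)
    fix a
    have "conv Delta f ?sb a = conv Delta f s a * b" by (simp add: conv_Sw Sw_mult_right mult.assoc)
    then show "t a * b = conv Delta f ?sb a" by (simp add: fs)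
  qed
  have "act Delta t u h b = conv Delta (conv Delta f ?sb) (conv Delta ?s' g) h"
    by (simp add: act_conv tb[symmetric] s'g)
  also have "conv Delta (conv Delta f ?sb) (conv Delta ?s' g) = conv Delta f (conv Delta (conv Delta ?sb ?s') g)"
    by (simp add: cassoc[OF fl sbl clin[OF s'l gl]] cassoc[OF sbl s'l gl])
  also have "\<dots> = conv Delta (conv Delta f X) g" unfolding X_def by (simp add: cassoc[OF fl clin[OF sbl s'l] gl])
  also have "conv Delta f X = conv Delta X f" by (rule conv_comm_B[OF fB XB fl Xl])
  also have "conv Delta (conv Delta X f) g = X" by (simp add: cassoc[OF Xl fl gl] fg cuR[OF Xl])
  finally show ?thesis unfolding X_def .
qed

lemma act_B: assumes s: "s \<in> OmegaA sH sA Delta rho" and b: "b \<in> B" shows "act Delta t u h b \<in> B"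
  unfolding IND[OF s b] by (rule conv_B[OF Om_colinear[OF s] Om_anticol[OF s] b])

end


locale mctx = cctx sH Delta eps S sA rho t u
  for sH :: "'k::comm_ring_1 \<Rightarrow> 'h::ring_1 \<Rightarrow> 'h" and Delta :: "'h \<Rightarrow> ('h \<times> 'h) list"
    and eps :: "'h \<Rightarrow> 'k" and S :: "'h \<Rightarrow> 'h"
    and sA :: "'k \<Rightarrow> 'a::ring_1 \<Rightarrow> 'a" and rho :: "'a \<Rightarrow> ('a \<times> 'h) list"
    and t u :: "'h \<Rightarrow> 'a" +
  fixes t0 :: "'h \<Rightarrow> 'a"
  assumes t0: "t0 \<in> OmegaA sH sA Delta rho"
begin

abbreviation u0 where "u0 \<equiv> (\<lambda>x. t0 (S x))"

lemma t0l: "klin sH sA t0" by (rule Om_lin[OF t0])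
lemma u0l: "klin sH sA u0" by (rule Om_linS[OF t0])
lemma t0u0: "conv Delta t0 u0 = cunit sA eps" using Om_convS[OF t0] by simp
lemma u0t0: "conv Delta u0 t0 = cunit sA eps" using Om_convS[OF t0] by simp

lemma conv_const_right: "conv Delta f (\<lambda>x. g x * c) h = conv Delta f g h * c"
  by (simp add: conv_Sw Sw_mult_right mult.assoc)
lemma conv_const_left: "conv Delta (\<lambda>x. c * f x) g h = c * conv Delta f g h"
  by (simp add: conv_Sw Sw_mult_left mult.assoc)

definition Xf :: "'a \<Rightarrow> 'h \<Rightarrow> 'a" where "Xf \<beta> = conv Delta (\<lambda>x. t0 x * \<beta>) u0"

lemma Xf_lin: "klin sH sA (Xf \<beta>)"
  unfolding Xf_def by (rule clin[OF klin_mult_right[OF kalgA t0l] u0l])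

lemma Xf_B: "\<beta> \<in> B \<Longrightarrow> Xf \<beta> h \<in> B"
  unfolding Xf_def by (rule conv_B[OF Om_colinear[OF t0] Om_anticol[OF t0]])

lemma act_Xf: "\<beta> \<in> B \<Longrightarrow> act Delta t u h \<beta> = Xf \<beta> h"
  unfolding Xf_def by (rule IND[OF t0])

lemma Xf_t0: "conv Delta (Xf \<beta>) t0 = (\<lambda>x. t0 x * \<beta>)"
  unfolding Xf_def by (simp add: cassoc[OF klin_mult_right[OF kalgA t0l] u0l t0l] u0t0 cuR[OF klin_mult_right[OF kalgA t0l]])

lemma Z1D:
  assumes "v \<in> Z1 sH sA Delta eps rho t u"
  shows "klin sH sA v" and "\<And>h. v h \<in> B"
    and "\<exists>w. klin sH sA w \<and> (\<forall>h. w h \<in> B) \<and> conv Delta v w = cunit sA eps \<and> conv Delta w v = cunit sA eps"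
    and "\<And>h k. v (h * k) = sum_list (map (\<lambda>(x, y). act Delta t u x (v k) * v y) (Delta h))"
  using assms unfolding Z1_def by auto

lemma Om_to_Z1:
  assumes s: "s \<in> OmegaA sH sA Delta rho"
  shows "conv Delta s u0 \<in> Z1 sH sA Delta eps rho t u"
proof -
  let ?s' = "\<lambda>x. s (S x)" and ?v = "conv Delta s u0"
  have sl: "klin sH sA s" by (rule Om_lin[OF s])
  have s'l: "klin sH sA ?s'" by (rule Om_linS[OF s])
  have ss': "conv Delta s ?s' = cunit sA eps" and s's: "conv Delta ?s' s = cunit sA eps"
    using Om_convS[OF s] by auto
  have vl: "klin sH sA ?v" by (rule clin[OF sl u0l])
  have vB: "\<And>h. ?v h \<in> B" by (rule conv_B1[OF Om_colinear[OF s] Om_anticol[OF t0]])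
  have w: "\<exists>w. klin sH sA w \<and> (\<forall>h. w h \<in> B) \<and> conv Delta ?v w = cunit sA eps \<and> conv Delta w ?v = cunit sA eps"
  proof (intro exI conjI allI)
    show "klin sH sA (conv Delta t0 ?s')" by (rule clin[OF t0l s'l])
    show "\<And>h. conv Delta t0 ?s' h \<in> B" by (rule conv_B1[OF Om_colinear[OF t0] Om_anticol[OF s]])
    show "conv Delta ?v (conv Delta t0 ?s') = cunit sA eps"
      by (simp add: cassoc[OF sl u0l clin[OF t0l s'l]] cassoc[OF u0l t0l s'l, symmetric] u0t0 cuL[OF s'l] ss')
    show "conv Delta (conv Delta t0 ?s') ?v = cunit sA eps"
      by (simp add: cassoc[OF t0l s'l clin[OF sl u0l]] cassoc[OF s'l sl u0l, symmetric] s's cuL[OF u0l] t0u0)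
  qed
  have coc: "\<And>h k. ?v (h * k) = sum_list (map (\<lambda>(x, y). act Delta t u x (?v k) * ?v y) (Delta h))"
  proof -
    fix h k
    let ?\<beta> = "?v k"
    have sbl: "klin sH sA (\<lambda>x. s x * ?\<beta>)" by (rule klin_mult_right[OF kalgA sl])
    have i: "\<And>x. act Delta t u x ?\<beta> = conv Delta (\<lambda>x. s x * ?\<beta>) ?s' x" by (rule IND[OF s vB])
    have "sum_list (map (\<lambda>(x, y). act Delta t u x ?\<beta> * ?v y) (Delta h))
        = sum_list (map (\<lambda>(x, y). conv Delta (\<lambda>x. s x * ?\<beta>) ?s' x * ?v y) (Delta h))"
      by (simp only: i)
    also have "\<dots> = conv Delta (conv Delta (\<lambda>x. s x * ?\<beta>) ?s') ?v h"
      by (simp only: conv_def[of Delta "conv Delta (\<lambda>x. s x * ?\<beta>) ?s'"])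
    also have "conv Delta (conv Delta (\<lambda>x. s x * ?\<beta>) ?s') ?v = conv Delta (\<lambda>x. s x * ?\<beta>) u0"
      by (simp add: cassoc[OF sbl s'l clin[OF sl u0l]] cassoc[OF s'l sl u0l, symmetric] s's cuL[OF u0l])
    also have "conv Delta (\<lambda>x. s x * ?\<beta>) u0 h = Sw h (\<lambda>a b. s a * ?\<beta> * u0 b)" by (simp add: conv_Sw)
    also have "\<dots> = Sw h (\<lambda>a b. Sw k (\<lambda>c d. s (a * c) * u0 (b * d)))"
      by (simp add: conv_Sw Om_mult[OF s] Om_mult[OF t0] S_antimult Sw_mult_left Sw_mult_right mult.assoc)
    also have "\<dots> = Sw (h * k) (\<lambda>p q. s p * u0 q)"
      by (rule Sw_mult[OF kmodA, symmetric]) (intro klin_mult_right[OF kalgA] klin_mult_left[OF kalgA] sl u0l)+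
    also have "\<dots> = ?v (h * k)" by (simp add: conv_Sw)
    finally show "?v (h * k) = sum_list (map (\<lambda>(x, y). act Delta t u x (?v k) * ?v y) (Delta h))" by simp
  qed
  show ?thesis unfolding Z1_def using vl vB w coc by blast
qed

end


context mctx begin

lemma conv_Xf_B_comm:
  assumes vl: "klin sH sA v" and vB: "\<And>h. v h \<in> B" and \<beta>: "\<beta> \<in> B"
  shows "conv Delta (Xf \<beta>) v = conv Delta v (Xf \<beta>)"
  by (rule conv_comm_B[OF Xf_B[OF \<beta>] vB Xf_lin vl])

lemma Z1_to_Om:
  assumes v: "v \<in> Z1 sH sA Delta eps rho t u"
  shows "conv Delta v t0 \<in> OmegaA sH sA Delta rho"
proof -
  have vl: "klin sH sA v" and vB: "\<And>h. v h \<in> B"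
    and coc: "\<And>h k. v (h * k) = sum_list (map (\<lambda>(x, y). act Delta t u x (v k) * v y) (Delta h))"
    using Z1D[OF v] by auto
  obtain w where wl: "klin sH sA w" and vw: "conv Delta v w = cunit sA eps"
    using Z1D(3)[OF v] by blast
  have L1: "\<And>a c. v (a * c) = conv Delta v (Xf (v c)) a"
  proof -
    fix a c
    have "v (a * c) = conv Delta (Xf (v c)) v a" using coc[of a c] by (simp add: act_Xf[OF vB] conv_def)
    then show "v (a * c) = conv Delta v (Xf (v c)) a" by (simp add: conv_Xf_B_comm[OF vl vB vB])
  qed
  have mult: "\<And>h k. conv Delta v t0 (h * k) = conv Delta v t0 h * conv Delta v t0 k"
  proof -
    fix h k
    have "conv Delta v t0 (h * k) = Sw h (\<lambda>a b. Sw k (\<lambda>c d. v (a * c) * t0 (b * d)))"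
      unfolding conv_Sw
      by (rule Sw_mult[OF kmodA]) (intro klin_mult_right[OF kalgA] klin_mult_left[OF kalgA] vl t0l)+
    also have "\<dots> = Sw h (\<lambda>a b. Sw k (\<lambda>c d. conv Delta v (Xf (v c)) a * t0 b * t0 d))"
      by (simp add: L1 Om_mult[OF t0] mult.assoc)
    also have "\<dots> = Sw k (\<lambda>c d. Sw h (\<lambda>a b. conv Delta v (Xf (v c)) a * t0 b) * t0 d)"
      by (subst Sw_swap) (simp add: Sw_mult_right)
    also have "\<dots> = Sw k (\<lambda>c d. conv Delta (conv Delta v (Xf (v c))) t0 h * t0 d)"
      by (simp add: conv_Sw)
    also have "\<dots> = Sw k (\<lambda>c d. conv Delta v t0 h * v c * t0 d)"
      by (simp add: cassoc[OF vl Xf_lin t0l] Xf_t0 conv_const_right)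
    also have "\<dots> = conv Delta v t0 h * conv Delta v t0 k"
      by (simp add: conv_Sw Sw_mult_left mult.assoc)
    finally show "conv Delta v t0 (h * k) = conv Delta v t0 h * conv Delta v t0 k" .
  qed
  have one: "conv Delta v t0 1 = 1"
  proof -
    have Sw1: "\<And>f g. klin sH sA f \<Longrightarrow> klin sH sA g \<Longrightarrow> conv Delta f g 1 = f 1 * g 1"
      unfolding conv_Sw
      by (rule Sw_one[OF kmodA]) (intro klin_mult_right[OF kalgA] klin_mult_left[OF kalgA], assumption+)+
    have X1: "\<And>\<beta>. Xf \<beta> 1 = \<beta>"
      unfolding Xf_def by (simp add: Sw1[OF klin_mult_right[OF kalgA t0l] u0l] Om_one[OF t0] S_one)
    have "v 1 = v (1 * 1)" by simp
    also have "\<dots> = conv Delta v (Xf (v 1)) 1" by (rule L1)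
    also have "\<dots> = v 1 * v 1" by (simp add: Sw1[OF vl Xf_lin] X1)
    finally have vv: "v 1 = v 1 * v 1" .
    have "v 1 * w 1 = 1" using fun_cong[OF vw, of 1] by (simp add: Sw1[OF vl wl] cunit_def eps_one kmod_one[OF kmodA])
    then have "v 1 = 1"
    proof -
      assume a: "v 1 * w 1 = 1"
      have "v 1 = v 1 * (v 1 * w 1)" using a by simp
      also have "\<dots> = (v 1 * v 1) * w 1" by (simp add: mult.assoc)
      also have "\<dots> = 1" using a vv[symmetric] by simp
      finally show ?thesis .
    qed
    then show ?thesis by (simp add: Sw1[OF vl t0l] Om_one[OF t0])
  qed
  show ?thesis unfolding OmegaA_def using conv_colinear[OF vl vB Om_colinear[OF t0]] mult one by blast
qed

lemma inv1: "s \<in> OmegaA sH sA Delta rho \<Longrightarrow> conv Delta (conv Delta s u0) t0 = s"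
proof -
  assume s: "s \<in> OmegaA sH sA Delta rho"
  have sl: "klin sH sA s" by (rule Om_lin[OF s])
  show ?thesis unfolding cassoc[OF sl u0l t0l] u0t0 cuR[OF sl] ..
qed

lemma inv2: "v \<in> Z1 sH sA Delta eps rho t u \<Longrightarrow> conv Delta (conv Delta v t0) u0 = v"
proof -
  assume v: "v \<in> Z1 sH sA Delta eps rho t u"
  have vl: "klin sH sA v" by (rule Z1D(1)[OF v])
  show ?thesis unfolding cassoc[OF vl t0l u0l] t0u0 cuR[OF vl] ..
qed

lemma coh_to_eq:
  assumes v: "v \<in> Z1 sH sA Delta eps rho t u" and v1: "v1 \<in> Z1 sH sA Delta eps rho t u"
    and c: "cohomologous sH sA Delta rho t u v v1"
  shows "omega_equiv (coinv sH sA rho) (conv Delta v t0) (conv Delta v1 t0)"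
proof -
  obtain b b' where b: "b \<in> B" and b': "b' \<in> B" and bb': "b * b' = 1" and b'b: "b' * b = 1"
    and veq: "v = conv Delta (\<lambda>h. act Delta t u h b * b') v1"
    using c unfolding cohomologous_def by blast
  have v1l: "klin sH sA v1" and v1B: "\<And>h. v1 h \<in> B" using Z1D[OF v1] by auto
  have fb: "(\<lambda>h. act Delta t u h b * b') = (\<lambda>h. b' * Xf b h)"
    by (rule ext) (simp add: act_Xf[OF b] commB[OF Xf_B[OF b] b'])
  have key: "\<And>h. conv Delta v t0 h = b' * (conv Delta v1 t0 h * b)"
  proof -
    fix h
    have "conv Delta v t0 h = conv Delta (conv Delta (\<lambda>h. b' * Xf b h) v1) t0 h" by (simp add: veq fb)
    also have "\<dots> = b' * conv Delta (conv Delta (Xf b) v1) t0 h"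
    proof -
      have "conv Delta (\<lambda>h. b' * Xf b h) v1 = (\<lambda>h. b' * conv Delta (Xf b) v1 h)"
        by (rule ext) (rule conv_const_left)
      then show ?thesis by (simp add: conv_const_left)
    qed
    also have "conv Delta (conv Delta (Xf b) v1) t0 = conv Delta v1 (conv Delta (Xf b) t0)"
      by (simp add: conv_Xf_B_comm[OF v1l v1B b] cassoc[OF v1l Xf_lin t0l])
    also have "\<dots> h = conv Delta v1 t0 h * b" by (simp add: Xf_t0 conv_const_right)
    finally show "conv Delta v t0 h = b' * (conv Delta v1 t0 h * b)" .
  qed
  have "b \<in> unitsB B" unfolding unitsB_def using b b' bb' b'b by blast
  moreover have "\<forall>h. b * conv Delta v t0 h = conv Delta v1 t0 h * b"
    by (simp add: key mult.assoc[symmetric] bb')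
  ultimately show ?thesis unfolding omega_equiv_def by blast
qed

lemma eq_to_coh:
  assumes s1: "s1 \<in> OmegaA sH sA Delta rho" and s2: "s2 \<in> OmegaA sH sA Delta rho"
    and e: "omega_equiv (coinv sH sA rho) s1 s2"
  shows "cohomologous sH sA Delta rho t u (conv Delta s1 u0) (conv Delta s2 u0)"
proof -
  obtain b where bU: "b \<in> unitsB B" and bs: "\<And>h. b * s1 h = s2 h * b"
    using e unfolding omega_equiv_def by blast
  obtain b' where b: "b \<in> B" and b': "b' \<in> B" and bb': "b * b' = 1" and b'b: "b' * b = 1"
    using bU unfolding unitsB_def by blast
  let ?s2' = "\<lambda>x. s2 (S x)"
  have s1l: "klin sH sA s1" and s2l: "klin sH sA s2" and s2'l: "klin sH sA ?s2'"
    using Om_lin[OF s1] Om_lin[OF s2] Om_linS[OF s2] by auto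
  have s2bl: "klin sH sA (\<lambda>x. s2 x * b)" by (rule klin_mult_right[OF kalgA s2l])
  have s2's2: "conv Delta ?s2' s2 = cunit sA eps" using Om_convS[OF s2] by simp
  have fb: "(\<lambda>h. act Delta t u h b * b') = (\<lambda>h. b' * conv Delta (\<lambda>x. s2 x * b) ?s2' h)"
  proof (rule ext)
    fix h
    have XB: "conv Delta (\<lambda>x. s2 x * b) ?s2' h \<in> B" by (rule conv_B[OF Om_colinear[OF s2] Om_anticol[OF s2] b])
    have "act Delta t u h b = conv Delta (\<lambda>x. s2 x * b) ?s2' h" by (rule IND[OF s2 b])
    then show "act Delta t u h b * b' = b' * conv Delta (\<lambda>x. s2 x * b) ?s2' h"
      using commB[OF XB b'] by simp
  qed
  have "conv Delta (\<lambda>h. act Delta t u h b * b') (conv Delta s2 u0) = conv Delta s1 u0"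
  proof (rule ext)
    fix h
    have "conv Delta (\<lambda>h. act Delta t u h b * b') (conv Delta s2 u0) h
        = b' * conv Delta (conv Delta (\<lambda>x. s2 x * b) ?s2') (conv Delta s2 u0) h"
      unfolding fb by (rule conv_const_left)
    also have "conv Delta (conv Delta (\<lambda>x. s2 x * b) ?s2') (conv Delta s2 u0) = conv Delta (\<lambda>x. s2 x * b) u0"
      by (simp add: cassoc[OF s2bl s2'l clin[OF s2l u0l]] cassoc[OF s2'l s2l u0l, symmetric] s2's2 cuL[OF u0l])
    also have "(\<lambda>x. s2 x * b) = (\<lambda>x. b * s1 x)" by (rule ext) (simp add: bs)
    also have "b' * conv Delta (\<lambda>x. b * s1 x) u0 h = conv Delta s1 u0 h"
    proof -
      have "b' * conv Delta (\<lambda>x. b * s1 x) u0 h = b' * (b * conv Delta s1 u0 h)" by (simp only: conv_const_left)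
      also have "\<dots> = (b' * b) * conv Delta s1 u0 h" by (simp only: mult.assoc)
      finally show ?thesis by (simp add: b'b)
    qed
    finally show "conv Delta (\<lambda>h. act Delta t u h b * b') (conv Delta s2 u0) h = conv Delta s1 u0 h" .
  qed
  then have "conv Delta s1 u0 = conv Delta (\<lambda>h. act Delta t u h b * b') (conv Delta s2 u0)" by (rule sym)
  then show ?thesis unfolding cohomologous_def using b b' bb' b'b by (intro exI conjI)
qed

end


lemma quot_bij:
  assumes F: "\<forall>v\<in>Z. F v \<in> Om" and Fi: "\<forall>s\<in>Om. Fi s \<in> Z \<and> F (Fi s) = s" and iF: "\<forall>v\<in>Z. Fi (F v) = v"
    and RQ: "\<forall>v\<in>Z. \<forall>v1\<in>Z. R v v1 \<longrightarrow> Q (F v) (F v1)"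
    and QR: "\<forall>s1\<in>Om. \<forall>s2\<in>Om. Q s1 s2 \<longrightarrow> R (Fi s1) (Fi s2)"
  shows "\<exists>G. bij_betw G (Z // {(v, v1). v \<in> Z \<and> v1 \<in> Z \<and> R v v1}) (Om // {(s1, s2). s1 \<in> Om \<and> s2 \<in> Om \<and> Q s1 s2})
     \<and> (\<forall>v\<in>Z. G ({(v, v1). v \<in> Z \<and> v1 \<in> Z \<and> R v v1} `` {v}) = {(s1, s2). s1 \<in> Om \<and> s2 \<in> Om \<and> Q s1 s2} `` {F v})"
proof -
  define RZ where "RZ = {(v, v1). v \<in> Z \<and> v1 \<in> Z \<and> R v v1}"
  define RO where "RO = {(s1, s2). s1 \<in> Om \<and> s2 \<in> Om \<and> Q s1 s2}"
  have cls: "\<And>v. v \<in> Z \<Longrightarrow> F ` (RZ `` {v}) = RO `` {F v}"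
  proof -
    fix v assume v: "v \<in> Z"
    show "F ` (RZ `` {v}) = RO `` {F v}"
    proof
      show "F ` (RZ `` {v}) \<subseteq> RO `` {F v}" using v F RQ unfolding RZ_def RO_def by auto
    next
      show "RO `` {F v} \<subseteq> F ` (RZ `` {v})"
      proof
        fix s assume "s \<in> RO `` {F v}"
        then have s: "s \<in> Om" and q: "Q (F v) s" and Fv: "F v \<in> Om" unfolding RO_def by auto
        have "R (Fi (F v)) (Fi s)" using QR Fv s q by blast
        then have "R v (Fi s)" using iF v by simp
        then have "Fi s \<in> RZ `` {v}" using v Fi s unfolding RZ_def by auto
        moreover have "s = F (Fi s)" using Fi s by simp
        ultimately show "s \<in> F ` (RZ `` {v})" by blast
      qed
    qed
  qed
  have injF: "inj_on F Z" using iF by (metis inj_on_def)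
  have sub: "\<And>X. X \<in> Z // RZ \<Longrightarrow> X \<subseteq> Z" unfolding RZ_def quotient_def by auto
  have "bij_betw (\<lambda>X. F ` X) (Z // RZ) (Om // RO)"
    unfolding bij_betw_def
  proof
    show "inj_on (\<lambda>X. F ` X) (Z // RZ)"
      unfolding inj_on_def using inj_on_image_eq_iff[OF injF] sub by blast
    show "(\<lambda>X. F ` X) ` (Z // RZ) = Om // RO"
    proof
      show "(\<lambda>X. F ` X) ` (Z // RZ) \<subseteq> Om // RO"
      proof
        fix Y assume "Y \<in> (\<lambda>X. F ` X) ` (Z // RZ)"
        then obtain v where v: "v \<in> Z" and Y: "Y = F ` (RZ `` {v})" unfolding quotient_def by blast
        then show "Y \<in> Om // RO" using cls F by (auto intro: quotientI)
      qed
    next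
      show "Om // RO \<subseteq> (\<lambda>X. F ` X) ` (Z // RZ)"
      proof
        fix Y assume "Y \<in> Om // RO"
        then obtain s where s: "s \<in> Om" and Y: "Y = RO `` {s}" unfolding quotient_def by blast
        have "Y = F ` (RZ `` {Fi s})" using cls[of "Fi s"] Fi s Y by simp
        moreover have "RZ `` {Fi s} \<in> Z // RZ" using Fi s by (auto intro: quotientI)
        ultimately show "Y \<in> (\<lambda>X. F ` X) ` (Z // RZ)" by blast
      qed
    qed
  qed
  then show ?thesis unfolding RZ_def[symmetric] RO_def[symmetric] using cls by blast
qed

theorem proposition5p7:
  fixes sH :: "'k::comm_ring_1 \<Rightarrow> 'h::ring_1 \<Rightarrow> 'h"
    and Delta :: "'h \<Rightarrow> ('h \<times> 'h) list" and eps :: "'h \<Rightarrow> 'k" and S :: "'h \<Rightarrow> 'h"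
    and sA :: "'k \<Rightarrow> 'a::ring_1 \<Rightarrow> 'a" and rho :: "'a \<Rightarrow> ('a \<times> 'h) list"
    and t u t0 u0 :: "'h \<Rightarrow> 'a"
  assumes "hopf_alg sH Delta eps S"
    and "cocommutative sH Delta"
    and "comod_alg sH Delta eps sA rho"
    and "colinear sH sA Delta rho t"
    and "conv_inverse sH sA Delta eps t u"
    and "\<forall>x \<in> coinv sH sA rho. \<forall>y \<in> coinv sH sA rho. x * y = y * x"
    and t0: "t0 \<in> OmegaA sH sA Delta rho"
    and u0: "u0 = t0 \<circ> S"
  shows "bij_betw (\<lambda>v. conv Delta v t0) (Z1 sH sA Delta eps rho t u) (OmegaA sH sA Delta rho)
    \<and> (\<forall>s \<in> OmegaA sH sA Delta rho. conv Delta s u0 \<in> Z1 sH sA Delta eps rho t u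
          \<and> conv Delta (conv Delta s u0) t0 = s)
    \<and> (\<forall>v \<in> Z1 sH sA Delta eps rho t u. conv Delta (conv Delta v t0) u0 = v)
    \<and> (\<forall>v \<in> Z1 sH sA Delta eps rho t u. \<forall>v1 \<in> Z1 sH sA Delta eps rho t u.
          cohomologous sH sA Delta rho t u v v1
          \<longrightarrow> omega_equiv (coinv sH sA rho) (conv Delta v t0) (conv Delta v1 t0))
    \<and> (\<forall>s1 \<in> OmegaA sH sA Delta rho. \<forall>s2 \<in> OmegaA sH sA Delta rho.
          omega_equiv (coinv sH sA rho) s1 s2
          \<longrightarrow> cohomologous sH sA Delta rho t u (conv Delta s1 u0) (conv Delta s2 u0))
    \<and> (\<exists>G. bij_betw G
          (Z1 sH sA Delta eps rho t u //
             {(v, v1). v \<in> Z1 sH sA Delta eps rho t u \<and> v1 \<in> Z1 sH sA Delta eps rho t u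
                       \<and> cohomologous sH sA Delta rho t u v v1})
          (OmegaA sH sA Delta rho //
             {(s1, s2). s1 \<in> OmegaA sH sA Delta rho \<and> s2 \<in> OmegaA sH sA Delta rho
                        \<and> omega_equiv (coinv sH sA rho) s1 s2})
        \<and> (\<forall>v \<in> Z1 sH sA Delta eps rho t u.
             G ({(v, v1). v \<in> Z1 sH sA Delta eps rho t u \<and> v1 \<in> Z1 sH sA Delta eps rho t u
                       \<and> cohomologous sH sA Delta rho t u v v1} `` {v})
             = {(s1, s2). s1 \<in> OmegaA sH sA Delta rho \<and> s2 \<in> OmegaA sH sA Delta rho
                        \<and> omega_equiv (coinv sH sA rho) s1 s2} `` {conv Delta v t0}))"
proof -
  interpret mctx sH Delta eps S sA rho t u t0
    using assms by unfold_locales (auto simp: coinv_def)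
  have u0': "u0 = (\<lambda>x. t0 (S x))" using u0 by (simp add: comp_def)
  let ?Z = "Z1 sH sA Delta eps rho t u" and ?O = "OmegaA sH sA Delta rho"
  have A1: "\<forall>s \<in> ?O. conv Delta s u0 \<in> ?Z \<and> conv Delta (conv Delta s u0) t0 = s"
    unfolding u0' using Om_to_Z1 inv1 by blast
  have A2: "\<forall>v \<in> ?Z. conv Delta (conv Delta v t0) u0 = v"
    unfolding u0' using inv2 by blast
  have A0: "\<forall>v \<in> ?Z. conv Delta v t0 \<in> ?O" using Z1_to_Om by blast
  have B: "bij_betw (\<lambda>v. conv Delta v t0) ?Z ?O"
  proof (rule bij_betw_byWitness[where f'="\<lambda>s. conv Delta s u0"])
    show "\<forall>a\<in>?Z. conv Delta (conv Delta a t0) u0 = a" using A2 by blast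
    show "\<forall>a'\<in>?O. conv Delta (conv Delta a' u0) t0 = a'" using A1 by blast
    show "(\<lambda>v. conv Delta v t0) ` ?Z \<subseteq> ?O" using A0 by blast
    show "(\<lambda>s. conv Delta s u0) ` ?O \<subseteq> ?Z" using A1 by blast
  qed
  have A4: "\<forall>v \<in> ?Z. \<forall>v1 \<in> ?Z. cohomologous sH sA Delta rho t u v v1
          \<longrightarrow> omega_equiv (coinv sH sA rho) (conv Delta v t0) (conv Delta v1 t0)"
    using coh_to_eq by blast
  have A5: "\<forall>s1 \<in> ?O. \<forall>s2 \<in> ?O. omega_equiv (coinv sH sA rho) s1 s2
          \<longrightarrow> cohomologous sH sA Delta rho t u (conv Delta s1 u0) (conv Delta s2 u0)"
    unfolding u0' using eq_to_coh by blast
  have A6: "\<exists>G. bij_betw G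
          (?Z // {(v, v1). v \<in> ?Z \<and> v1 \<in> ?Z \<and> cohomologous sH sA Delta rho t u v v1})
          (?O // {(s1, s2). s1 \<in> ?O \<and> s2 \<in> ?O \<and> omega_equiv (coinv sH sA rho) s1 s2})
        \<and> (\<forall>v \<in> ?Z.
             G ({(v, v1). v \<in> ?Z \<and> v1 \<in> ?Z \<and> cohomologous sH sA Delta rho t u v v1} `` {v})
             = {(s1, s2). s1 \<in> ?O \<and> s2 \<in> ?O \<and> omega_equiv (coinv sH sA rho) s1 s2} `` {conv Delta v t0})"
    by (rule quot_bij[where F="\<lambda>v. conv Delta v t0" and Fi="\<lambda>s. conv Delta s u0"
          and R="\<lambda>v v1. cohomologous sH sA Delta rho t u v v1" and Q="\<lambda>s1 s2. omega_equiv (coinv sH sA rho) s1 s2",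
          OF A0 A1 A2 A4 A5])
  show ?thesis using B A1 A2 A4 A5 A6 by blast
qed


end
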